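(* Let $\Gamma$ be a finite cyclic group of order $f$ with generator $\sigma$. The $\mathbb Z[\Gamma]$-submodules $M$ of $\mathbb Z[\Gamma]$ such that $\mathbb Z[\Gamma]/M$ is torsion-free over $\mathbb Z$ are exactly the modules $\overline M_{\underline d}$, for $\underline d$ ranging over the sets of positive divisors of $f$.
   Context: For $d\mid f$, $M_d=\bigoplus_{0\le l\le\varphi(d)-1}\mathbb Z\,P_{f,d}(\sigma)\sigma^l\subset\mathbb Z[\Gamma]$, where $P_{f,d}(X)=(X^f-1)/\Phi_d(X)$, $\Phi_d$ is the $d$-th cyclotomic polynomial and $\varphi$ Euler's totient function. For a set $\underline d$ of divisors of $f$, $M_{\underline d}=\bigoplus_{d\in\underline d}M_d$ and $\overline M_{\underline d}=\{\chi\in\mathbb Z[\Gamma]:a\chi\in M_{\underline d}\text{ for some }a\in\mathbb Z\smallsetminus\{0\}\}$. *)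

theory Defs
  imports "HOL-Analysis.Analysis" "HOL-Computational_Algebra.Polynomial" "HOL-Library.Function_Algebras" "HOL-Number_Theory.Totient"
begin

(* Z[Gamma] for Gamma cyclic of order f with generator sigma, identified with Z/fZ via
   sigma^i <-> i mod f.  Elements: coefficient functions supported on {0..<f}. *)
definition grp_ring :: "nat \<Rightarrow> (nat \<Rightarrow> int) set" where
  "grp_ring f = {a. \<forall>i\<ge>f. a i = 0}"

definition gmult :: "nat \<Rightarrow> (nat \<Rightarrow> int) \<Rightarrow> (nat \<Rightarrow> int) \<Rightarrow> (nat \<Rightarrow> int)" where
  "gmult f a b = (\<lambda>k. if k < f then (\<Sum>i<f. \<Sum>j<f. if (i + j) mod f = k then a i * b j else 0) else 0)"

definition is_submodule :: "nat \<Rightarrow> (nat \<Rightarrow> int) set \<Rightarrow> bool" where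
  "is_submodule f M \<longleftrightarrow> M \<subseteq> grp_ring f \<and> 0 \<in> M \<and>
     (\<forall>x\<in>M. \<forall>y\<in>M. x + y \<in> M) \<and>
     (\<forall>r\<in>grp_ring f. \<forall>x\<in>M. gmult f r x \<in> M)"

definition quotient_torsion_free :: "nat \<Rightarrow> (nat \<Rightarrow> int) set \<Rightarrow> bool" where
  "quotient_torsion_free f M \<longleftrightarrow>
     (\<forall>x\<in>grp_ring f. \<forall>a::int. a \<noteq> 0 \<longrightarrow> (\<lambda>k. a * x k) \<in> M \<longrightarrow> x \<in> M)"

definition cyclo_complex :: "nat \<Rightarrow> complex poly" where
  "cyclo_complex d = (\<Prod>k\<in>{k. k < d \<and> coprime k d}. [:- cis (2 * pi * real k / real d), 1:])"

definition cyclo :: "nat \<Rightarrow> int poly" where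
  "cyclo d = (THE p. map_poly of_int p = cyclo_complex d)"

definition Pfd :: "nat \<Rightarrow> nat \<Rightarrow> int poly" where
  "Pfd f d = (monom 1 f - 1) div cyclo d"

(* p(sigma) * sigma^l in Z[Gamma] *)
definition poly_sigma_shift :: "nat \<Rightarrow> int poly \<Rightarrow> nat \<Rightarrow> (nat \<Rightarrow> int)" where
  "poly_sigma_shift f p l = (\<lambda>k. if k < f then (\<Sum>i\<le>degree p. if (i + l) mod f = k then coeff p i else 0) else 0)"

definition Md :: "nat \<Rightarrow> nat \<Rightarrow> (nat \<Rightarrow> int) set" where
  "Md f d = {(\<Sum>l<totient d. (\<lambda>k. c l * poly_sigma_shift f (Pfd f d) l k)) | c :: nat \<Rightarrow> int. True}"

definition MD :: "nat \<Rightarrow> nat set \<Rightarrow> (nat \<Rightarrow> int) set" where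
  "MD f D = {(\<Sum>d\<in>D. x d) | x. \<forall>d\<in>D. x d \<in> Md f d}"

definition MDbar :: "nat \<Rightarrow> nat set \<Rightarrow> (nat \<Rightarrow> int) set" where
  "MDbar f D = {y \<in> grp_ring f. \<exists>a::int. a \<noteq> 0 \<and> (\<lambda>k. a * y k) \<in> MD f D}"

end

theory Submission
  imports Defs "HOL-Computational_Algebra.Fundamental_Theorem_Algebra"
begin

definition ip :: "int poly \<Rightarrow> complex poly" where "ip p = map_poly of_int p"

lemma coeff_ip[simp]: "coeff (ip p) n = of_int (coeff p n)"
  by (simp add: ip_def coeff_map_poly)
lemma ip_0[simp]: "ip 0 = 0" by (simp add: ip_def)
lemma ip_1[simp]: "ip 1 = 1" by (simp add: ip_def)
lemma ip_add[simp]: "ip (p+q) = ip p + ip q" by (rule poly_eqI) simp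
lemma ip_diff[simp]: "ip (p-q) = ip p - ip q" by (rule poly_eqI) simp
lemma ip_uminus[simp]: "ip (-p) = - ip p" by (rule poly_eqI) simp
lemma ip_smult[simp]: "ip (smult c p) = smult (of_int c) (ip p)" by (rule poly_eqI) simp
lemma ip_mult[simp]: "ip (p*q) = ip p * ip q" by (rule poly_eqI) (simp add: coeff_mult)
lemma ip_monom[simp]: "ip (monom c n) = monom (of_int c) n" by (rule poly_eqI) (simp add: coeff_monom)
lemma ip_pCons[simp]: "ip (pCons a p) = pCons (of_int a) (ip p)" by (rule poly_eqI) (simp add: coeff_pCons split: nat.split)
lemma ip_power[simp]: "ip (p^n) = (ip p)^n" by (induction n) auto
lemma ip_prod[simp]: "ip (prod F A) = (\<Prod>a\<in>A. ip (F a))"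
  by (induction A rule: infinite_finite_induct) auto
lemma ip_inj[simp]: "ip p = ip q \<longleftrightarrow> p = q"
  by (auto simp: poly_eq_iff)
lemma ip_eq_0[simp]: "ip p = 0 \<longleftrightarrow> p = 0"
  using ip_inj[of p 0] by simp
lemma degree_ip[simp]: "degree (ip p) = degree p"
  unfolding ip_def by (rule degree_map_poly) simp
lemma ip_dvd: "p dvd q \<Longrightarrow> ip p dvd ip q"
  by (auto simp: dvd_def)
lemma poly_ip_pcompose: "poly (ip (pcompose p q)) z = poly (ip p) (poly (ip q) z)"
  by (induction p) (auto simp: pcompose_pCons)
lemma ip_pderiv[simp]: "ip (pderiv p) = pderiv (ip p)"
  by (rule poly_eqI) (simp add: coeff_pderiv)

definition omg :: "nat \<Rightarrow> complex" where "omg f = cis (2*pi/f)"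

lemma omg_pow: "omg f ^ n = cis (2*pi*real n/ real f)"
  by (simp add: omg_def Complex.DeMoivre field_simps)

lemma omg_pow_f[simp]: "f \<ge> 1 \<Longrightarrow> omg f ^ f = 1"
  by (simp add: omg_pow)

lemma omg_pow_mod: "f \<ge> 1 \<Longrightarrow> omg f ^ (n mod f) = omg f ^ n"
proof -
  assume "f \<ge> 1"
  have "omg f ^ n = omg f ^ (f * (n div f) + n mod f)" by (simp only: mult_div_mod_eq)
  also have "\<dots> = (omg f ^ f) ^ (n div f) * omg f ^ (n mod f)" by (simp only: power_add power_mult)
  finally show ?thesis using \<open>f\<ge>1\<close> by simp
qed

lemma omg_pow_inj: assumes "f \<ge> 1" "a < f" "b < f" "omg f ^ a = omg f ^ b" shows "a = b"
proof -
  have "inj_on (\<lambda>k. cis (2 * pi * real k / real f)) {..<f}"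
    using Complex.bij_betw_roots_unity[of f] assms(1) by (auto simp: bij_betw_def)
  then show ?thesis using assms by (auto simp: omg_pow inj_on_def)
qed

lemma omg_pow_eq_iff: "f \<ge> 1 \<Longrightarrow> omg f ^ a = omg f ^ b \<longleftrightarrow> a mod f = b mod f"
  by (metis omg_pow_inj omg_pow_mod mod_less_divisor less_le_trans zero_less_one)

lemma omg_ne0[simp]: "omg f \<noteq> 0" by (simp add: omg_def)

lemma roots_unity_omg: assumes "f \<ge> 1" "z ^ f = 1" shows "\<exists>k<f. z = omg f ^ k"
  using Complex.bij_betw_roots_unity[of f] assms by (auto simp: bij_betw_def omg_pow)

definition chi :: "nat \<Rightarrow> nat \<Rightarrow> (nat \<Rightarrow> int) \<Rightarrow> complex" where
  "chi f k x = (\<Sum>i<f. of_int (x i) * omg f ^ (i*k))"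

lemma sum_fun_apply: "(\<Sum>d\<in>D. (x d :: nat \<Rightarrow> int)) i = (\<Sum>d\<in>D. x d i)"
  by (induction D rule: infinite_finite_induct) auto

lemma chi_add: "chi f k (x + y) = chi f k x + chi f k y"
  by (simp add: chi_def sum.distrib algebra_simps)
lemma chi_scale: "chi f k (\<lambda>i. c * x i) = of_int c * chi f k x"
  by (simp add: chi_def sum_distrib_left algebra_simps)
lemma chi_sum: "chi f k (\<Sum>d\<in>D. x d) = (\<Sum>d\<in>D. chi f k (x d))"
  by (simp add: chi_def sum_fun_apply sum_distrib_right of_int_sum; rule sum.swap)
lemma chi_zero[simp]: "chi f k 0 = 0" by (simp add: chi_def)

abbreviation pss where "pss \<equiv> poly_sigma_shift"

lemma pss_alt: assumes "degree p < N"
  shows "pss f p l = (\<lambda>k. if k < f then (\<Sum>i<N. if (i + l) mod f = k then coeff p i else 0) else 0)"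
proof (rule ext)
  fix k
  have "(\<Sum>i\<le>degree p. if (i + l) mod f = k then coeff p i else 0) = (\<Sum>i<N. if (i + l) mod f = k then coeff p i else 0)"
    by (rule sum.mono_neutral_left) (use assms in \<open>auto simp: coeff_eq_0\<close>)
  then show "pss f p l k = (if k < f then (\<Sum>i<N. if (i + l) mod f = k then coeff p i else 0) else 0)"
    by (simp add: poly_sigma_shift_def)
qed

lemma pss_add: "pss f (p + q) l = pss f p l + pss f q l"
proof -
  define N where "N = Suc (degree p + degree q)"
  have "degree (p+q) < N" unfolding N_def using degree_add_le_max[of p q] by linarith
  moreover have "degree p < N" "degree q < N" by (auto simp: N_def)
  ultimately show ?thesis
    by (auto simp: pss_alt[of _ N] sum.distrib[symmetric] intro!: sum.cong ext)
qed

lemma pss_smult: "pss f (smult c p) l = (\<lambda>k. c * pss f p l k)"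
proof (rule ext)
  fix k
  have d: "degree (smult c p) < Suc (degree p)" using degree_smult_le[of c p] by linarith
  show "pss f (smult c p) l k = c * pss f p l k"
    unfolding pss_alt[OF d] pss_alt[OF lessI]
    by (cases "k < f") (auto simp: sum_distrib_left simp del: sum.lessThan_Suc intro!: sum.cong cong: if_cong)
qed

lemma pss_0[simp]: "pss f 0 l = 0"
  by (simp add: poly_sigma_shift_def zero_fun_def cong: if_cong)

lemma pss_uminus: "pss f (-p) l = - pss f p l"
  using pss_smult[of f "-1" p l] by (auto simp: fun_eq_iff)

lemma pss_diff: "pss f (p - q) l = pss f p l - pss f q l"
  using pss_add[of f p "-q" l] pss_uminus[of f q l] by simp

lemma pss_pCons0: "pss f (pCons 0 p) l = pss f p (Suc l)"
proof -
  have d: "degree (pCons 0 p) < Suc (Suc (degree p))" by (cases "p = 0") auto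
  show ?thesis
    unfolding pss_alt[OF d] pss_alt[OF lessI]
    by (auto simp: sum.lessThan_Suc_shift coeff_pCons simp del: sum.lessThan_Suc intro!: ext sum.cong)
qed

lemma pss_shift: "pss f (monom 1 m * p) l = pss f p (l + m)"
proof (induction m arbitrary: l)
  case 0 then show ?case by (simp add: monom_0)
next
  case (Suc m)
  have "monom 1 (Suc m) * p = pCons 0 (monom 1 m * p)"
    by (simp add: monom_Suc)
  then show ?case using Suc by (simp add: pss_pCons0)
qed

lemma pss_mod_l: "pss f p (l + f) = pss f p l"
proof -
  have e: "(i + (l + f)) mod f = (i + l) mod f" for i by (simp add: add.assoc[symmetric])
  show ?thesis by (simp add: poly_sigma_shift_def e cong: if_cong)
qed

lemma pss_mod_l': "pss f p (l mod f) = pss f p l"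
proof -
  have e: "(i + l mod f) mod f = (i + l) mod f" for i by (simp add: mod_add_right_eq)
  show ?thesis by (simp add: poly_sigma_shift_def e cong: if_cong)
qed

lemma pss_Xf: "pss f ((monom 1 f - 1) * p) l = 0"
  by (simp add: ring_distribs pss_diff pss_shift pss_mod_l)

lemma pss_grp: "pss f p l \<in> grp_ring f"
  by (simp add: poly_sigma_shift_def grp_ring_def)

definition ee :: "nat \<Rightarrow> nat \<Rightarrow> int" where "ee i = (\<lambda>j. if j = i then 1 else 0)"

lemma gmult_ee: assumes "i < f"
  shows "gmult f (ee i) x = (\<lambda>k. if k < f then (\<Sum>j<f. if (i + j) mod f = k then x j else 0) else 0)"
proof (rule ext)
  fix k
  have "(\<Sum>a<f. \<Sum>b<f. if (a + b) mod f = k then ee i a * x b else 0)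
      = (\<Sum>a<f. if a = i then (\<Sum>b<f. if (i + b) mod f = k then x b else 0) else 0)"
    by (rule sum.cong) (auto simp: ee_def cong: if_cong)
  also have "\<dots> = (\<Sum>b<f. if (i + b) mod f = k then x b else 0)"
    using assms by simp
  finally show "gmult f (ee i) x k = (if k < f then (\<Sum>j<f. if (i + j) mod f = k then x j else 0) else 0)"
    by (simp add: gmult_def)
qed

lemma gmult_ee_pss: assumes "i < f"
  shows "gmult f (ee i) (pss f p l) = pss f p (l + i)"
proof (rule ext)
  fix k
  show "gmult f (ee i) (pss f p l) k = pss f p (l + i) k"
  proof (cases "k < f")
    case False then show ?thesis using assms by (simp add: gmult_ee poly_sigma_shift_def)
  next
    case True
    have "(\<Sum>j<f. if (i + j) mod f = k then pss f p l j else 0)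
        = (\<Sum>j<f. \<Sum>t\<le>degree p. if (i + j) mod f = k \<and> (t + l) mod f = j then coeff p t else 0)"
    proof (rule sum.cong)
      fix j assume "j \<in> {..<f}"
      then show "(if (i + j) mod f = k then pss f p l j else 0) = (\<Sum>t\<le>degree p. if (i + j) mod f = k \<and> (t + l) mod f = j then coeff p t else 0)"
        by (cases "(i + j) mod f = k") (simp_all add: poly_sigma_shift_def)
    qed simp
    also have "\<dots> = (\<Sum>t\<le>degree p. \<Sum>j<f. if j = (t + l) mod f then (if (i + j) mod f = k then coeff p t else 0) else 0)"
      by (subst sum.swap) (auto intro!: sum.cong)
    also have "\<dots> = (\<Sum>t\<le>degree p. if (i + (t + l) mod f) mod f = k then coeff p t else 0)"
      using assms by (intro sum.cong) auto
    also have "\<dots> = (\<Sum>t\<le>degree p. if (t + (l + i)) mod f = k then coeff p t else 0)"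
      by (intro sum.cong) (auto simp: mod_add_right_eq add_ac)
    moreover have "pss f p (l + i) k = (\<Sum>t\<le>degree p. if (t + (l + i)) mod f = k then coeff p t else 0)"
      using True by (simp add: poly_sigma_shift_def)
    ultimately show ?thesis using True assms by (simp add: gmult_ee)
  qed
qed

lemma chi_pss: assumes "f \<ge> 1"
  shows "chi f k (pss f p l) = poly (ip p) (omg f ^ k) * omg f ^ (k * l)"
proof -
  have "chi f k (pss f p l) = (\<Sum>j<f. \<Sum>t\<le>degree p. if j = (t + l) mod f then of_int (coeff p t) * omg f ^ (j * k) else 0)"
    unfolding chi_def poly_sigma_shift_def
    by (auto simp: of_int_sum sum_distrib_right intro!: sum.cong)
  also have "\<dots> = (\<Sum>t\<le>degree p. \<Sum>j<f. if j = (t + l) mod f then of_int (coeff p t) * omg f ^ (j * k) else 0)"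
    by (rule sum.swap)
  also have "\<dots> = (\<Sum>t\<le>degree p. of_int (coeff p t) * omg f ^ (((t + l) mod f) * k))"
    using assms by (intro sum.cong) auto
  also have "\<dots> = (\<Sum>t\<le>degree p. of_int (coeff p t) * (omg f ^ k) ^ t * omg f ^ (k * l))"
  proof (intro sum.cong refl)
    fix t
    have "omg f ^ (((t + l) mod f) * k) = (omg f ^ ((t + l) mod f)) ^ k" by (simp add: power_mult)
    also have "\<dots> = (omg f ^ (t + l)) ^ k" using assms by (simp add: omg_pow_mod)
    also have "\<dots> = (omg f ^ k) ^ t * omg f ^ (k * l)"
      by (simp add: power_add power_mult_distrib power_mult[symmetric] mult_ac)
    finally show "of_int (coeff p t) * omg f ^ (((t + l) mod f) * k) = of_int (coeff p t) * (omg f ^ k) ^ t * omg f ^ (k * l)"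
      by simp
  qed
  also have "\<dots> = poly (ip p) (omg f ^ k) * omg f ^ (k * l)"
    by (simp add: poly_altdef sum_distrib_right)
  finally show ?thesis .
qed

definition pol :: "nat \<Rightarrow> (nat \<Rightarrow> int) \<Rightarrow> int poly" where
  "pol f x = (\<Sum>i<f. monom (x i) i)"

lemma coeff_pol: "coeff (pol f x) t = (if t < f then x t else 0)"
  by (simp add: pol_def coeff_sum coeff_monom)

lemma pss_pol: assumes "x \<in> grp_ring f" shows "pss f (pol f x) 0 = x"
proof (rule ext)
  fix k
  have d: "degree (pol f x) < Suc (f + degree (pol f x))" by simp
  show "pss f (pol f x) 0 k = x k"
  proof (cases "k < f")
    case True
    have "(\<Sum>i<Suc (f + degree (pol f x)). if i mod f = k then coeff (pol f x) i else 0)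
       = (\<Sum>i<Suc (f + degree (pol f x)). if i = k then x k else 0)"
      using True by (intro sum.cong) (auto simp: coeff_pol)
    then show ?thesis using True by (simp add: pss_alt[OF d])
  next
    case False then show ?thesis using assms by (simp add: poly_sigma_shift_def grp_ring_def)
  qed
qed

definition SG :: "nat \<Rightarrow> (nat \<times> nat) set" where
  "SG n = (SIGMA d:{d. d dvd n}. {j. j < d \<and> coprime j d})"

lemma SG_inj_aux:
  fixes n d j d' j' :: nat
  assumes n: "n \<ge> 1" and d: "d dvd n" "j < d" "coprime j d" and d': "d' dvd n" "j' < d'" "coprime j' d'"
    and eq: "j * (n div d) = j' * (n div d')"
  shows "d = d' \<and> j = j'"
proof -
  have dpos1: "d > 0" using d(2) by linarith
  have dpos2: "d' > 0" using d'(2) by linarith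
  note dpos = dpos1 dpos2
  have nd: "n = d * (n div d)" "n = d' * (n div d')" using d d' by auto
  obtain m where m: "n = d * m" using d by (auto elim: dvdE)
  obtain m' where m': "n = d' * m'" using d' by (auto elim: dvdE)
  have "n div d = m" using m dpos by simp
  moreover have "n div d' = m'" using m' dpos by simp
  ultimately have eq2: "j * m = j' * m'" using eq by simp
  have "(j * d') * n = (j' * d) * n"
  proof -
    have "(j * d') * n = (j * m) * (d * d')" using m by (simp add: mult_ac)
    also have "\<dots> = (j' * m') * (d * d')" using eq2 by simp
    also have "\<dots> = (j' * d) * n" using m' by (simp add: mult_ac)
    finally show ?thesis .
  qed
  then have e: "j * d' = j' * d" using n by simp
  have "d dvd j * d'" using e by simp
  then have "d dvd d'" using d(3) by (simp add: coprime_commute coprime_dvd_mult_right_iff)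
  moreover have "d' dvd j' * d" using e by (metis dvd_triv_left mult.commute)
  then have "d' dvd d" using d'(3) by (simp add: coprime_commute coprime_dvd_mult_right_iff)
  ultimately have "d = d'" by (simp add: dvd_antisym)
  moreover then have "j = j'" using e dpos by simp
  ultimately show ?thesis by simp
qed

lemma SG_pre:
  fixes n k :: nat
  assumes n: "n \<ge> 1" and k: "k < n"
  shows "(n div gcd k n, k div gcd k n) \<in> SG n" and "(k div gcd k n) * (n div (n div gcd k n)) = k"
proof -
  define g where "g = gcd k n"
  have g0: "g > 0" using n by (simp add: g_def)
  have gk: "g dvd k" and gn: "g dvd n" by (auto simp: g_def)
  obtain m where m: "n = g * m" using gn by (auto elim: dvdE)
  obtain a where a: "k = g * a" using gk by (auto elim: dvdE)
  have m0: "m > 0" using m n by (cases m) auto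
  have ndiv: "n div (n div g) = g" using m m0 g0 by simp
  have "a < m" using k a m g0 by simp
  then have "k div g < n div g" using a m g0 by simp
  moreover have "coprime (k div g) (n div g)" using n unfolding g_def by (intro div_gcd_coprime) auto
  moreover have "n div g dvd n" using gn by (metis dvd_div_mult_self dvd_triv_left)
  ultimately show "(n div gcd k n, k div gcd k n) \<in> SG n" by (simp add: SG_def g_def[symmetric])
  show "(k div gcd k n) * (n div (n div gcd k n)) = k"
    unfolding g_def[symmetric] ndiv using gk by simp
qed

lemma SG_range: assumes "(d, j) \<in> SG n" "n \<ge> 1" shows "j * (n div d) < n"
proof -
  have "d dvd n" "j < d" using assms by (auto simp: SG_def)
  then obtain m where m: "n = d * m" by (auto elim: dvdE)
  have "m > 0" using m assms(2) by (cases m) auto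
  have "d > 0" using \<open>j < d\<close> by simp
  then have "j * m < d * m" using \<open>j < d\<close> \<open>m > 0\<close> by simp
  then show ?thesis using m \<open>d > 0\<close> by simp
qed

lemma SG_bij: assumes "n \<ge> 1"
  shows "bij_betw (\<lambda>(d, j). j * (n div d)) (SG n) {..<n}"
  unfolding bij_betw_def
proof
  show "inj_on (\<lambda>(d, j). j * (n div d)) (SG n)"
  proof (rule inj_onI)
    fix x y assume x: "x \<in> SG n" and y: "y \<in> SG n" and e: "(case x of (d, j) \<Rightarrow> j * (n div d)) = (case y of (d, j) \<Rightarrow> j * (n div d))"
    obtain d j where xd: "x = (d, j)" by (cases x)
    obtain d' j' where yd: "y = (d', j')" by (cases y)
    have "d = d' \<and> j = j'"
      by (rule SG_inj_aux[OF assms]) (use x y e xd yd in \<open>simp_all add: SG_def\<close>)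
    then show "x = y" using xd yd by simp
  qed
  show "(\<lambda>(d, j). j * (n div d)) ` SG n = {..<n}"
  proof
    show "(\<lambda>(d, j). j * (n div d)) ` SG n \<subseteq> {..<n}"
    proof
      fix k assume "k \<in> (\<lambda>(d, j). j * (n div d)) ` SG n"
      then obtain d j where "(d, j) \<in> SG n" "k = j * (n div d)" by auto
      then show "k \<in> {..<n}" using SG_range[OF _ assms] by simp
    qed
    show "{..<n} \<subseteq> (\<lambda>(d, j). j * (n div d)) ` SG n"
    proof
      fix k assume "k \<in> {..<n}"
      then have "k < n" by simp
      from SG_pre[OF assms this] show "k \<in> (\<lambda>(d, j). j * (n div d)) ` SG n"
        by (intro image_eqI[where x = "(n div gcd k n, k div gcd k n)"]) simp_all
    qed
  qed
qed

lemma SG_unique: fixes n d j k :: nat assumes "n \<ge> 1" "(d, j) \<in> SG n" "j * (n div d) = k"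
  shows "d = n div gcd k n"
proof -
  have "k < n" using SG_range[OF assms(2,1)] assms(3) by simp
  from SG_pre[OF assms(1) this] have 1: "(n div gcd k n, k div gcd k n) \<in> SG n"
    and 2: "(k div gcd k n) * (n div (n div gcd k n)) = k" by auto
  have "d = n div gcd k n \<and> j = k div gcd k n"
    by (rule SG_inj_aux[OF assms(1)]) (use assms(2,3) 1 2 in \<open>simp_all add: SG_def\<close>)
  then show ?thesis by simp
qed

lemma finite_SG: "n \<ge> 1 \<Longrightarrow> finite (SG n)"
  unfolding SG_def by (rule finite_SigmaI) auto

lemma degree_xn1: fixes n :: nat assumes "n \<ge> 1"
  shows "degree (monom 1 n - 1 :: 'a::idom poly) = n" and "lead_coeff (monom 1 n - 1 :: 'a::idom poly) = 1"
proof -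
  have c: "coeff (monom 1 n - 1 :: 'a poly) i = (if i = n then 1 else if i = 0 then -1 else 0)" for i
  proof -
    have n0: "n \<noteq> 0" using assms by simp
    show ?thesis using n0 by (auto simp: coeff_monom coeff_1)
  qed
  have "degree (monom 1 n - 1 :: 'a poly) \<le> n" by (rule degree_le) (use assms in \<open>auto simp: c\<close>)
  moreover have "n \<le> degree (monom 1 n - 1 :: 'a poly)" by (rule le_degree) (use assms in \<open>simp add: c\<close>)
  ultimately show d: "degree (monom 1 n - 1 :: 'a::idom poly) = n" by simp
  show "lead_coeff (monom 1 n - 1 :: 'a::idom poly) = 1" using assms by (simp add: d c)
qed

lemma xn1_roots: fixes n :: nat assumes n: "n \<ge> 1"
  shows "(monom 1 n - 1 :: complex poly) = (\<Prod>k<n. [:-(omg n ^ k), 1:])"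
proof -
  define p :: "complex poly" where "p = monom 1 n - 1"
  have pz: "poly p z = z ^ n - 1" for z by (simp add: p_def poly_monom)
  have pd: "pderiv p = monom (of_nat n) (n - 1)" by (simp add: p_def pderiv_diff pderiv_monom)
  have "rsquarefree p"
    unfolding rsquarefree_roots
  proof (intro allI notI)
    fix a assume "poly p a = 0 \<and> poly (pderiv p) a = 0"
    then have "a ^ n = 1" "of_nat n * a ^ (n - 1) = 0" by (auto simp: pz pd poly_monom)
    then show False using n by (cases "a = 0") (auto simp: power_0_left)
  qed
  from complex_poly_decompose_rsquarefree[OF this]
  have "p = smult (lead_coeff p) (\<Prod>z | poly p z = 0. [:-z, 1:])" by simp
  also have "lead_coeff p = 1" using degree_xn1[OF n] by (simp add: p_def)
  also have "{z. poly p z = 0} = {z. z ^ n = 1}" by (auto simp: pz)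
  also have "(\<Prod>z\<in>{z. z ^ n = 1}. [:-z, 1:]) = (\<Prod>k<n. [:-(cis (2 * pi * real k / real n)), 1:])"
    using Complex.bij_betw_roots_unity[of n] n by (intro prod.reindex_bij_betw[symmetric]) auto
  finally show ?thesis by (simp add: p_def omg_pow)
qed

lemma cis_omg: fixes n d j :: nat assumes n: "n \<ge> 1" and d: "d dvd n"
  shows "cis (2 * pi * real j / real d) = omg n ^ (j * (n div d))"
proof -
  obtain m where m: "n = d * m" using d by (auto elim: dvdE)
  have d0: "d > 0" and m0: "m > 0" using n m by (auto intro!: Nat.gr0I)
  have "n div d = m" using m d0 by simp
  then have "2 * pi * real (j * (n div d)) / real n = 2 * pi * real j / real d"
    using m d0 m0 by (simp add: field_simps)
  then show ?thesis by (simp add: omg_pow)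
qed

definition BB :: "nat \<Rightarrow> nat set" where "BB d = {j. j < d \<and> coprime j d}"

lemma cyclo_complex_alt: fixes n d :: nat assumes n: "n \<ge> 1" and d: "d dvd n"
  shows "cyclo_complex d = (\<Prod>j\<in>BB d. [:-(omg n ^ (j * (n div d))), 1:])"
  unfolding cyclo_complex_def BB_def using cis_omg[OF n d] by simp

lemma xn1_cyclo: fixes n :: nat assumes n: "n \<ge> 1"
  shows "(monom 1 n - 1 :: complex poly) = (\<Prod>d\<in>{d. d dvd n}. cyclo_complex d)"
proof -
  have fin: "finite {d. d dvd n}" using n by simp
  have "(\<Prod>d\<in>{d. d dvd n}. cyclo_complex d) = (\<Prod>d\<in>{d. d dvd n}. \<Prod>j\<in>BB d. [:-(omg n ^ (j * (n div d))), 1:])"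
    using cyclo_complex_alt[OF n] by simp
  also have "\<dots> = (\<Prod>(d, j)\<in>SG n. [:-(omg n ^ (j * (n div d))), 1:])"
    unfolding SG_def BB_def by (rule prod.Sigma) (use fin in auto)
  also have "\<dots> = (\<Prod>x\<in>SG n. (\<lambda>k. [:-(omg n ^ k), 1:]) ((\<lambda>(d, j). j * (n div d)) x))"
    by (rule prod.cong) auto
  also have "\<dots> = (\<Prod>k<n. [:-(omg n ^ k), 1:])"
    by (rule prod.reindex_bij_betw[OF SG_bij[OF n]])
  finally show ?thesis using xn1_roots[OF n] by simp
qed

lemma lc_cyclo_complex: "lead_coeff (cyclo_complex d) = 1"
  unfolding cyclo_complex_def lead_coeff_prod by simp

lemma int_quot: assumes e: "ip A = ip B * C" and lc: "lead_coeff B = 1"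
  shows "\<exists>Q. C = ip Q"
proof -
  have B0: "B \<noteq> 0" using lc by auto
  obtain q r where qr: "pseudo_divmod A B = (q, r)" by (cases "pseudo_divmod A B")
  from pseudo_divmod[OF B0 qr] lc have A: "A = B * q + r" and r: "r = 0 \<or> degree r < degree B" by auto
  have "ip B * (C - ip q) = ip r" using e A by (simp add: algebra_simps)
  show ?thesis
  proof (cases "C = ip q")
    case True then show ?thesis by blast
  next
    case False
    then have "degree (ip B * (C - ip q)) = degree B + degree (C - ip q)"
      using B0 by (subst degree_mult_eq) auto
    then have "degree (ip r) \<ge> degree B" using \<open>ip B * (C - ip q) = ip r\<close> by simp
    moreover have "ip r \<noteq> 0" using \<open>ip B * (C - ip q) = ip r\<close> B0 False by auto
    ultimately show ?thesis using r by auto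
  qed
qed

lemma cyclo_ex: fixes d :: nat shows "d \<ge> 1 \<Longrightarrow> \<exists>p. ip p = cyclo_complex d"
proof (induction d rule: less_induct)
  case (less d)
  define E where "E = {e. e dvd d} - {d}"
  have finE: "finite E" using less.prems by (simp add: E_def)
  have "\<forall>e\<in>E. \<exists>p. ip p = cyclo_complex e"
  proof
    fix e assume "e \<in> E"
    then have "e dvd d" "e \<noteq> d" by (auto simp: E_def)
    then have "e < d" "e \<ge> 1" using less.prems by (auto simp: dvd_imp_le le_neq_implies_less intro!: Nat.gr0I)
    then show "\<exists>p. ip p = cyclo_complex e" using less.IH by blast
  qed
  then obtain q where q: "\<forall>e\<in>E. ip (q e) = cyclo_complex e" by metis
  define B where "B = (\<Prod>e\<in>E. q e)"
  have ipB: "ip B = (\<Prod>e\<in>E. cyclo_complex e)" using q by (simp add: B_def)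
  have "lead_coeff (ip B) = 1" unfolding ipB lead_coeff_prod by (simp add: lc_cyclo_complex)
  then have lcB: "lead_coeff B = 1" by (simp add: coeff_ip)
  have "ip (monom 1 d - 1) = (\<Prod>e\<in>{e. e dvd d}. cyclo_complex e)"
    using xn1_cyclo[OF less.prems] by simp
  also have "\<dots> = cyclo_complex d * (\<Prod>e\<in>E. cyclo_complex e)"
    unfolding E_def using less.prems by (intro prod.remove) auto
  finally have "ip (monom 1 d - 1) = ip B * cyclo_complex d" by (simp add: ipB mult.commute)
  from int_quot[OF this lcB] show ?case by metis
qed

lemma ip_cyclo: fixes d :: nat assumes "d \<ge> 1" shows "ip (cyclo d) = cyclo_complex d"
proof -
  obtain p where p: "ip p = cyclo_complex d" using cyclo_ex[OF assms] by blast
  have "cyclo d = p" unfolding cyclo_def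
  proof (rule the_equality)
    show "map_poly of_int p = cyclo_complex d" using p by (simp add: ip_def)
    fix pa assume "map_poly of_int pa = cyclo_complex d"
    then have "ip pa = ip p" using p by (simp add: ip_def)
    then show "pa = p" by simp
  qed
  then show ?thesis using p by simp
qed

lemma lc_cyclo: fixes d :: nat assumes "d \<ge> 1" shows "lead_coeff (cyclo d) = 1"
  using lc_cyclo_complex[of d] ip_cyclo[OF assms] by (metis coeff_ip degree_ip of_int_eq_1_iff)

lemma cyclo_nz: fixes d :: nat assumes "d \<ge> 1" shows "cyclo d \<noteq> 0"
  using lc_cyclo[OF assms] by auto

lemma card_BB: "card (BB d) = totient d"
proof (cases "d \<le> 1")
  case True
  then consider "d = 0" | "d = 1" by linarith
  then show ?thesis by cases (auto simp: BB_def)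
next
  case False
  have "BB d = totatives d"
  proof
    show "BB d \<subseteq> totatives d"
    proof
      fix j assume "j \<in> BB d"
      then have "j < d" "coprime j d" by (auto simp: BB_def)
      moreover have "j \<noteq> 0" using False \<open>coprime j d\<close> by (cases "j = 0") auto
      ultimately show "j \<in> totatives d" by (simp add: in_totatives_iff)
    qed
    show "totatives d \<subseteq> BB d"
    proof
      fix j assume "j \<in> totatives d"
      then have "j \<le> d" "coprime j d" by (auto simp: in_totatives_iff)
      moreover have "j \<noteq> d" using False \<open>coprime j d\<close> by auto
      ultimately show "j \<in> BB d" by (simp add: BB_def)
    qed
  qed
  then show ?thesis by (simp add: totient_def)
qed

lemma degree_cyclo: fixes d :: nat assumes "d \<ge> 1" shows "degree (cyclo d) = totient d"
proof -
  have "degree (cyclo_complex d) = card (BB d)"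
    unfolding cyclo_complex_def BB_def by (subst degree_prod_eq_sum_degree) auto
  then show ?thesis using ip_cyclo[OF assms] card_BB by (metis degree_ip)
qed

lemma xf1_int: fixes f :: nat assumes "f \<ge> 1"
  shows "(monom 1 f - 1 :: int poly) = (\<Prod>d\<in>{d. d dvd f}. cyclo d)"
proof -
  have "ip (\<Prod>d\<in>{d. d dvd f}. cyclo d) = (\<Prod>d\<in>{d. d dvd f}. cyclo_complex d)"
    using assms by (auto simp: ip_cyclo intro!: prod.cong Nat.gr0I)
  then show ?thesis using xn1_cyclo[OF assms] by (simp flip: ip_inj)
qed

lemma Pfd_eq: fixes f d :: nat assumes f: "f \<ge> 1" and d: "d dvd f"
  shows "Pfd f d = (\<Prod>e\<in>{e. e dvd f} - {d}. cyclo e)" and "cyclo d * Pfd f d = monom 1 f - 1"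
proof -
  have d1: "d \<ge> 1" using d f by (auto intro!: Nat.gr0I)
  have "(monom 1 f - 1 :: int poly) = cyclo d * (\<Prod>e\<in>{e. e dvd f} - {d}. cyclo e)"
    unfolding xf1_int[OF f] using f d by (intro prod.remove) auto
  then show 1: "Pfd f d = (\<Prod>e\<in>{e. e dvd f} - {d}. cyclo e)"
    unfolding Pfd_def using cyclo_nz[OF d1] by simp
  show "cyclo d * Pfd f d = monom 1 f - 1"
    unfolding 1 xf1_int[OF f] using f d by (intro prod.remove[symmetric]) auto
qed

lemma poly_cyclo_omg: fixes f e k :: nat assumes f: "f \<ge> 1" and e: "e dvd f" and k: "k < f"
  shows "poly (cyclo_complex e) (omg f ^ k) = 0 \<longleftrightarrow> e = f div gcd k f"
proof -
  have finB: "finite (BB e)" by (simp add: BB_def)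
  have "poly (cyclo_complex e) (omg f ^ k) = (\<Prod>j\<in>BB e. omg f ^ k - omg f ^ (j * (f div e)))"
    unfolding cyclo_complex_alt[OF f e] poly_prod by simp
  also have "\<dots> = 0 \<longleftrightarrow> (\<exists>j\<in>BB e. omg f ^ k = omg f ^ (j * (f div e)))"
    using finB by (simp add: prod_zero_iff)
  also have "\<dots> \<longleftrightarrow> (\<exists>j\<in>BB e. k = j * (f div e))"
  proof
    assume "\<exists>j\<in>BB e. omg f ^ k = omg f ^ (j * (f div e))"
    then obtain j where j: "j \<in> BB e" "omg f ^ k = omg f ^ (j * (f div e))" by blast
    have "(e, j) \<in> SG f" using j e by (simp add: SG_def BB_def)
    then have "j * (f div e) < f" using SG_range f by blast
    then have "k = j * (f div e)" using omg_pow_inj[OF f k] j by blast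
    then show "\<exists>j\<in>BB e. k = j * (f div e)" using j by blast
  qed auto
  also have "\<dots> \<longleftrightarrow> e = f div gcd k f"
  proof
    assume "\<exists>j\<in>BB e. k = j * (f div e)"
    then obtain j where "j \<in> BB e" "k = j * (f div e)" by blast
    then show "e = f div gcd k f" using SG_unique[OF f, of e j k] e by (simp add: SG_def BB_def)
  next
    assume ee: "e = f div gcd k f"
    from SG_pre[OF f k] show "\<exists>j\<in>BB e. k = j * (f div e)"
      unfolding ee by (auto simp: SG_def BB_def)
  qed
  finally show ?thesis .
qed

definition ordk :: "nat \<Rightarrow> nat \<Rightarrow> nat" where "ordk f k = f div gcd k f"

lemma ordk_dvd: "ordk f k dvd f"
  unfolding ordk_def by (metis dvd_def dvd_div_mult_self gcd_dvd2 mult.commute)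

lemma ordk_pos: "f \<ge> 1 \<Longrightarrow> ordk f k \<ge> 1"
  unfolding ordk_def by (metis div_greater_zero_iff gcd_le2_nat gcd_pos_nat less_one not_le gcd_nat.eq_neutr_iff)

lemma poly_Pfd_omg: fixes f d k :: nat assumes f: "f \<ge> 1" and d: "d dvd f" and k: "k < f"
  shows "poly (ip (Pfd f d)) (omg f ^ k) = 0 \<longleftrightarrow> ordk f k \<noteq> d"
proof -
  have "ip (Pfd f d) = (\<Prod>e\<in>{e. e dvd f} - {d}. cyclo_complex e)"
    unfolding Pfd_eq(1)[OF f d] ip_prod using f by (auto intro!: prod.cong ip_cyclo Nat.gr0I)
  then have "poly (ip (Pfd f d)) (omg f ^ k) = (\<Prod>e\<in>{e. e dvd f} - {d}. poly (cyclo_complex e) (omg f ^ k))"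
    by (simp add: poly_prod)
  also have "\<dots> = 0 \<longleftrightarrow> (\<exists>e\<in>{e. e dvd f} - {d}. poly (cyclo_complex e) (omg f ^ k) = 0)"
    using f by (intro prod_zero_iff) auto
  also have "\<dots> \<longleftrightarrow> (\<exists>e\<in>{e. e dvd f} - {d}. e = ordk f k)"
    using poly_cyclo_omg[OF f _ k] by (auto simp: ordk_def)
  also have "\<dots> \<longleftrightarrow> ordk f k \<noteq> d" using ordk_dvd[of f k] by auto
  finally show ?thesis .
qed

lemma Md_iff: "x \<in> Md f d \<longleftrightarrow> (\<exists>c. x = (\<Sum>l<totient d. (\<lambda>k. c l * pss f (Pfd f d) l k)))"
  by (auto simp: Md_def)

lemma Md_0: "0 \<in> Md f d"
proof -
  have z: "(\<lambda>k. (0::int) * pss f (Pfd f d) l k) = 0" for l by (simp add: fun_eq_iff)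
  have "0 = (\<Sum>l<totient d. (\<lambda>k. (\<lambda>_. 0::int) l * pss f (Pfd f d) l k))" by (simp only: z sum.neutral_const)
  then show ?thesis unfolding Md_iff by (intro exI[of _ "\<lambda>_. 0"])
qed

lemma Md_add: assumes "x \<in> Md f d" "y \<in> Md f d" shows "x + y \<in> Md f d"
proof -
  obtain c1 c2 where c: "x = (\<Sum>l<totient d. (\<lambda>k. c1 l * pss f (Pfd f d) l k))"
    "y = (\<Sum>l<totient d. (\<lambda>k. c2 l * pss f (Pfd f d) l k))" using assms unfolding Md_iff by blast
  have "x + y = (\<Sum>l<totient d. (\<lambda>k. (c1 l + c2 l) * pss f (Pfd f d) l k))"
    unfolding c sum.distrib[symmetric] by (intro sum.cong) (auto simp: algebra_simps)
  then show ?thesis unfolding Md_iff by (intro exI[of _ "\<lambda>l. c1 l + c2 l"])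
qed

lemma Md_scale: assumes "x \<in> Md f d" shows "(\<lambda>k. a * x k) \<in> Md f d"
proof -
  obtain c where c: "x = (\<Sum>l<totient d. (\<lambda>k. c l * pss f (Pfd f d) l k))"
    using assms unfolding Md_iff by blast
  have "(\<lambda>k. a * x k) = (\<Sum>l<totient d. (\<lambda>k. (a * c l) * pss f (Pfd f d) l k))"
    unfolding c by (rule ext) (simp add: sum_fun_apply sum_distrib_left mult_ac)
  then show ?thesis unfolding Md_iff by (intro exI[of _ "\<lambda>l. a * c l"])
qed

lemma Md_neg: assumes "x \<in> Md f d" shows "- x \<in> Md f d"
proof -
  have "- x = (\<lambda>k. (-1) * x k)" by (simp add: fun_eq_iff)
  also have "\<dots> \<in> Md f d" by (rule Md_scale[OF assms])
  finally show ?thesis .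
qed

lemma Md_sum: assumes "\<And>i. i \<in> A \<Longrightarrow> y i \<in> Md f d" shows "(\<Sum>i\<in>A. y i) \<in> Md f d"
  using assms by (induction A rule: infinite_finite_induct) (auto simp: Md_0 Md_add)

lemma Md_basis: assumes "l < totient d" shows "pss f (Pfd f d) l \<in> Md f d"
proof -
  have "pss f (Pfd f d) l = (\<Sum>l'<totient d. (\<lambda>k. ee l l' * pss f (Pfd f d) l' k))"
  proof (rule ext)
    fix k
    have "(\<Sum>l'<totient d. (\<lambda>k. ee l l' * pss f (Pfd f d) l' k)) k
        = (\<Sum>l'<totient d. if l' = l then pss f (Pfd f d) l k else 0)"
      unfolding sum_fun_apply by (intro sum.cong) (auto simp: ee_def)
    also have "\<dots> = pss f (Pfd f d) l k" using assms by simp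
    finally show "pss f (Pfd f d) l k = (\<Sum>l'<totient d. (\<lambda>k. ee l l' * pss f (Pfd f d) l' k)) k" by simp
  qed
  then show ?thesis unfolding Md_iff by blast
qed

lemma pss_sum: "pss f (\<Sum>i\<in>A. p i) l = (\<Sum>i\<in>A. pss f (p i) l)"
  by (induction A rule: infinite_finite_induct) (auto simp: pss_add)

lemma pss_mult_expand: "pss f (q * p) L = (\<Sum>i\<le>degree q. (\<lambda>k. coeff q i * pss f p (L + i) k))"
proof -
  have "q * p = (\<Sum>i\<le>degree q. monom (coeff q i) i) * p" by (simp add: poly_as_sum_of_monoms)
  also have "\<dots> = (\<Sum>i\<le>degree q. smult (coeff q i) (monom 1 i * p))"
  proof -
    have t: "monom c n * p = smult c (monom 1 n * p)" for c n
      by (simp only: mult_smult_left[symmetric] smult_monom mult.right_neutral)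
    show ?thesis unfolding sum_distrib_right by (intro sum.cong refl t)
  qed
  finally show ?thesis by (simp add: pss_sum pss_smult pss_shift)
qed

lemma pss_in_Md: fixes f d :: nat assumes f: "f \<ge> 1" and d: "d dvd f"
  shows "pss f (Pfd f d) L \<in> Md f d"
proof (induction L rule: less_induct)
  case (less L)
  show ?case
  proof (cases "L < totient d")
    case True then show ?thesis by (rule Md_basis)
  next
    case False
    define L' where "L' = L - totient d"
    have d1: "d \<ge> 1" using d f by (auto intro!: Nat.gr0I)
    define P where "P = Pfd f d"
    define Q where "Q = cyclo d"
    have degQ: "degree Q = totient d" and lcQ: "coeff Q (totient d) = 1"
      using degree_cyclo[OF d1] lc_cyclo[OF d1] by (auto simp: Q_def)
    have "pss f (Q * P) L' = pss f ((monom 1 f - 1) * 1) L'"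
      using Pfd_eq(2)[OF f d] by (simp add: Q_def P_def)
    also have "\<dots> = 0" by (rule pss_Xf)
    finally have "(\<Sum>i\<le>totient d. (\<lambda>k. coeff Q i * pss f P (L' + i) k)) = 0"
      using pss_mult_expand[of f Q P L'] degQ by simp
    also have "(\<Sum>i\<le>totient d. (\<lambda>k. coeff Q i * pss f P (L' + i) k))
       = (\<Sum>i<totient d. (\<lambda>k. coeff Q i * pss f P (L' + i) k)) + pss f P L"
      using False lcQ by (simp add: lessThan_Suc_atMost[symmetric] L'_def)
    finally have "pss f P L = - (\<Sum>i<totient d. (\<lambda>k. coeff Q i * pss f P (L' + i) k))"
      by (metis add.commute eq_neg_iff_add_eq_0)
    moreover have "(\<Sum>i<totient d. (\<lambda>k. coeff Q i * pss f P (L' + i) k)) \<in> Md f d"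
    proof (rule Md_sum)
      fix i assume "i \<in> {..<totient d}"
      then have "L' + i < L" using False by (auto simp: L'_def)
      then show "(\<lambda>k. coeff Q i * pss f P (L' + i) k) \<in> Md f d"
        using less.IH by (auto simp: P_def intro!: Md_scale)
    qed
    ultimately show ?thesis using Md_neg by (metis P_def)
  qed
qed

lemma gmult_decomp: "gmult f r x = (\<Sum>i<f. (\<lambda>k. r i * gmult f (ee i) x k))"
proof (rule ext)
  fix k
  show "gmult f r x k = (\<Sum>i<f. (\<lambda>k. r i * gmult f (ee i) x k)) k"
  proof (cases "k < f")
    case True
    have "(\<Sum>i<f. (\<lambda>k. r i * gmult f (ee i) x k)) k = (\<Sum>i<f. r i * (\<Sum>j<f. if (i + j) mod f = k then x j else 0))"
      unfolding sum_fun_apply using True by (intro sum.cong) (auto simp: gmult_ee)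
    also have "\<dots> = (\<Sum>i<f. \<Sum>j<f. if (i + j) mod f = k then r i * x j else 0)"
      by (auto simp: sum_distrib_left intro!: sum.cong)
    finally show ?thesis using True by (simp add: gmult_def)
  next
    case False then show ?thesis by (simp add: gmult_def sum_fun_apply)
  qed
qed

lemma gmult_sum2: "gmult f r (\<Sum>d\<in>D. x d) = (\<Sum>d\<in>D. gmult f r (x d))"
proof (rule ext)
  fix k
  show "gmult f r (\<Sum>d\<in>D. x d) k = (\<Sum>d\<in>D. gmult f r (x d)) k"
  proof (cases "k < f")
    case True
    have "gmult f r (\<Sum>d\<in>D. x d) k = (\<Sum>a<f. \<Sum>b<f. \<Sum>d\<in>D. if (a + b) mod f = k then r a * x d b else 0)"
      using True by (auto simp: gmult_def sum_fun_apply sum_distrib_left intro!: sum.cong)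
    also have "\<dots> = (\<Sum>a<f. \<Sum>d\<in>D. \<Sum>b<f. if (a + b) mod f = k then r a * x d b else 0)"
      by (intro sum.cong refl) (rule sum.swap)
    also have "\<dots> = (\<Sum>d\<in>D. \<Sum>a<f. \<Sum>b<f. if (a + b) mod f = k then r a * x d b else 0)"
      by (rule sum.swap)
    finally show ?thesis using True by (simp add: gmult_def sum_fun_apply)
  next
    case False then show ?thesis by (simp add: gmult_def sum_fun_apply)
  qed
qed

lemma gmult_scale2: "gmult f r (\<lambda>k. c * x k) = (\<lambda>k. c * gmult f r x k)"
  by (auto simp: gmult_def sum_distrib_left mult_ac intro!: ext sum.cong)

lemma gmult_add2: "gmult f r (x + y) = gmult f r x + gmult f r y"
  using gmult_sum2[of f r "\<lambda>b. if b then x else y" UNIV] by (simp add: UNIV_bool add.commute)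

lemma Md_gmult: fixes f d :: nat assumes f: "f \<ge> 1" and d: "d dvd f" and x: "x \<in> Md f d"
  shows "gmult f r x \<in> Md f d"
proof -
  obtain c where c: "x = (\<Sum>l<totient d. (\<lambda>k. c l * pss f (Pfd f d) l k))"
    using x unfolding Md_iff by blast
  have "gmult f r x = (\<Sum>l<totient d. (\<lambda>k. c l * gmult f r (pss f (Pfd f d) l) k))"
    unfolding c gmult_sum2 gmult_scale2 ..
  also have "\<dots> \<in> Md f d"
  proof (intro Md_sum Md_scale)
    fix l
    have "gmult f r (pss f (Pfd f d) l) = (\<Sum>i<f. (\<lambda>k. r i * pss f (Pfd f d) (l + i) k))"
      unfolding gmult_decomp[of f r] by (intro sum.cong refl) (simp add: gmult_ee_pss)
    also have "\<dots> \<in> Md f d" by (intro Md_sum Md_scale pss_in_Md f d)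
    finally show "gmult f r (pss f (Pfd f d) l) \<in> Md f d" .
  qed
  finally show ?thesis .
qed

lemma MD_iff: "x \<in> MD f D \<longleftrightarrow> (\<exists>y. x = (\<Sum>d\<in>D. y d) \<and> (\<forall>d\<in>D. y d \<in> Md f d))"
  by (auto simp: MD_def)

lemma MD_add: assumes "x \<in> MD f D" "y \<in> MD f D" shows "x + y \<in> MD f D"
proof -
  obtain x1 y1 where x: "x = (\<Sum>d\<in>D. x1 d)" "\<forall>d\<in>D. x1 d \<in> Md f d"
    and y: "y = (\<Sum>d\<in>D. y1 d)" "\<forall>d\<in>D. y1 d \<in> Md f d" using assms unfolding MD_iff by blast
  have "x + y = (\<Sum>d\<in>D. x1 d + y1 d)" unfolding x y sum.distrib ..
  moreover have "\<forall>d\<in>D. x1 d + y1 d \<in> Md f d" using x y by (auto intro: Md_add)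
  ultimately show ?thesis unfolding MD_iff by blast
qed

lemma MD_scale: assumes "x \<in> MD f D" shows "(\<lambda>k. a * x k) \<in> MD f D"
proof -
  obtain x1 where x: "x = (\<Sum>d\<in>D. x1 d)" "\<forall>d\<in>D. x1 d \<in> Md f d"
    using assms unfolding MD_iff by blast
  have "(\<lambda>k. a * x k) = (\<Sum>d\<in>D. (\<lambda>k. a * x1 d k))"
    unfolding x by (rule ext) (simp add: sum_fun_apply sum_distrib_left)
  moreover have "\<forall>d\<in>D. (\<lambda>k. a * x1 d k) \<in> Md f d" using x by (auto intro: Md_scale)
  ultimately show ?thesis unfolding MD_iff by blast
qed

lemma MD_gmult: fixes f :: nat assumes f: "f \<ge> 1" and D: "D \<subseteq> {d. 0 < d \<and> d dvd f}" and x: "x \<in> MD f D"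
  shows "gmult f r x \<in> MD f D"
proof -
  obtain x1 where x1: "x = (\<Sum>d\<in>D. x1 d)" "\<forall>d\<in>D. x1 d \<in> Md f d"
    using x unfolding MD_iff by blast
  have "gmult f r x = (\<Sum>d\<in>D. gmult f r (x1 d))" unfolding x1 gmult_sum2 ..
  moreover have "\<forall>d\<in>D. gmult f r (x1 d) \<in> Md f d" using x1 D f by (auto intro: Md_gmult)
  ultimately show ?thesis unfolding MD_iff by blast
qed

lemma MD_0: "0 \<in> MD f D"
proof -
  have "0 = (\<Sum>d\<in>D. (\<lambda>_. 0::nat \<Rightarrow> int) d)" by simp
  moreover have "\<forall>d\<in>D. (\<lambda>_. 0::nat \<Rightarrow> int) d \<in> Md f d" by (simp add: Md_0)
  ultimately show ?thesis unfolding MD_iff by blast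
qed

lemma gmult_grp: "gmult f r x \<in> grp_ring f"
  by (simp add: gmult_def grp_ring_def)

lemma MDbar_sat: fixes f :: nat assumes f: "f \<ge> 1" and D: "D \<subseteq> {d. 0 < d \<and> d dvd f}"
  shows "is_submodule f (MDbar f D) \<and> quotient_torsion_free f (MDbar f D)"
proof -
  have sub: "MDbar f D \<subseteq> grp_ring f" by (auto simp: MDbar_def)
  have zero: "0 \<in> MDbar f D"
  proof -
    have "(\<lambda>k. (1::int) * (0::nat \<Rightarrow> int) k) = 0" by (simp add: fun_eq_iff)
    then show ?thesis using MD_0[of f D] by (auto simp: MDbar_def grp_ring_def intro!: exI[of _ 1])
  qed
  have add: "x + y \<in> MDbar f D" if x: "x \<in> MDbar f D" and y: "y \<in> MDbar f D" for x y
  proof -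
    obtain a where a: "a \<noteq> 0" "(\<lambda>k. a * x k) \<in> MD f D" using x by (auto simp: MDbar_def)
    obtain b where b: "b \<noteq> 0" "(\<lambda>k. b * y k) \<in> MD f D" using y by (auto simp: MDbar_def)
    have 1: "(\<lambda>k. b * (a * x k)) \<in> MD f D" using MD_scale[OF a(2), of b] by simp
    have 2: "(\<lambda>k. a * (b * y k)) \<in> MD f D" using MD_scale[OF b(2), of a] by simp
    have "(\<lambda>k. (a * b) * (x + y) k) = (\<lambda>k. b * (a * x k)) + (\<lambda>k. a * (b * y k))"
      by (simp add: fun_eq_iff algebra_simps)
    also have "\<dots> \<in> MD f D" by (rule MD_add[OF 1 2])
    finally have "(\<lambda>k. (a * b) * (x + y) k) \<in> MD f D" .
    moreover have "x + y \<in> grp_ring f" using x y by (auto simp: MDbar_def grp_ring_def)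
    ultimately show ?thesis using a b unfolding MDbar_def by (auto intro!: exI[of _ "a * b"])
  qed
  have mult: "gmult f r x \<in> MDbar f D" if x: "x \<in> MDbar f D" for r x
  proof -
    obtain a where a: "a \<noteq> 0" "(\<lambda>k. a * x k) \<in> MD f D" using x by (auto simp: MDbar_def)
    have "(\<lambda>k. a * gmult f r x k) = gmult f r (\<lambda>k. a * x k)" by (simp add: gmult_scale2)
    also have "\<dots> \<in> MD f D" using a f D by (intro MD_gmult)
    finally show ?thesis using a gmult_grp[of f r x] unfolding MDbar_def by auto
  qed
  have tf: "quotient_torsion_free f (MDbar f D)"
    unfolding quotient_torsion_free_def
  proof (intro ballI allI impI)
    fix x a assume x: "x \<in> grp_ring f" and a: "a \<noteq> 0" and ax: "(\<lambda>k. a * x k) \<in> MDbar f D"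
    obtain b where b: "b \<noteq> 0" "(\<lambda>k. b * (a * x k)) \<in> MD f D" using ax by (auto simp: MDbar_def)
    then have "(\<lambda>k. (b * a) * x k) \<in> MD f D" by (simp add: mult.assoc)
    then show "x \<in> MDbar f D" using x a b unfolding MDbar_def by (auto intro!: exI[of _ "b * a"])
  qed
  show ?thesis using sub zero add mult tf unfolding is_submodule_def by blast
qed

definition SS :: "nat \<Rightarrow> (nat \<Rightarrow> int) set \<Rightarrow> nat set" where
  "SS f M = {k. k < f \<and> (\<forall>m\<in>M. chi f k m = 0)}"

lemma chi_Md: fixes f d k :: nat assumes f: "f \<ge> 1" and d: "d dvd f" and x: "x \<in> Md f d" and k: "k < f"
  and o: "ordk f k \<noteq> d" shows "chi f k x = 0"
proof -
  obtain c where c: "x = (\<Sum>l<totient d. (\<lambda>k. c l * pss f (Pfd f d) l k))"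
    using x unfolding Md_iff by blast
  have P0: "poly (ip (Pfd f d)) (omg f ^ k) = 0" using poly_Pfd_omg[OF f d k] o by simp
  show ?thesis unfolding c chi_sum chi_scale chi_pss[OF f] P0 by simp
qed

lemma chi_MD: fixes f k :: nat assumes f: "f \<ge> 1" and D: "D \<subseteq> {d. 0 < d \<and> d dvd f}" and x: "x \<in> MD f D"
  and k: "k < f" and o: "ordk f k \<notin> D" shows "chi f k x = 0"
proof -
  obtain x1 where x1: "x = (\<Sum>d\<in>D. x1 d)" "\<forall>d\<in>D. x1 d \<in> Md f d"
    using x unfolding MD_iff by blast
  have "chi f k (x1 d) = 0" if "d \<in> D" for d
    using chi_Md[OF f _ _ k] that x1 D o by auto
  then show ?thesis unfolding x1 chi_sum by simp
qed

lemma SS_MDbar: fixes f :: nat assumes f: "f \<ge> 1" and D: "D \<subseteq> {d. 0 < d \<and> d dvd f}"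
  shows "SS f (MDbar f D) = {k. k < f \<and> ordk f k \<notin> D}"
proof
  show "{k. k < f \<and> ordk f k \<notin> D} \<subseteq> SS f (MDbar f D)"
  proof (clarify)
    fix k assume k: "k < f" and o: "ordk f k \<notin> D"
    have "chi f k m = 0" if m: "m \<in> MDbar f D" for m
    proof -
      obtain a where a: "a \<noteq> 0" "(\<lambda>i. a * m i) \<in> MD f D" using m by (auto simp: MDbar_def)
      have "of_int a * chi f k m = 0" using chi_MD[OF f D a(2) k o] by (simp add: chi_scale)
      then show ?thesis using a by simp
    qed
    then show "k \<in> SS f (MDbar f D)" using k by (simp add: SS_def)
  qed
  show "SS f (MDbar f D) \<subseteq> {k. k < f \<and> ordk f k \<notin> D}"
  proof
    fix k assume kS: "k \<in> SS f (MDbar f D)"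
    then have k: "k < f" by (simp add: SS_def)
    have "ordk f k \<notin> D"
    proof
      assume dD: "ordk f k \<in> D"
      define d where "d = ordk f k"
      have d: "d dvd f" "d \<ge> 1" using dD D by (auto simp: d_def)
      define x where "x = pss f (Pfd f d) 0"
      have xM: "x \<in> Md f d" unfolding x_def using d by (intro Md_basis) (simp add: Nat.gr0I)
      have "finite {d. d dvd f}" using f by (intro finite_divisors_nat) simp
      moreover have "D \<subseteq> {d. d dvd f}" using D by auto
      ultimately have finD: "finite D" using finite_subset by blast
      have "x = (\<Sum>e\<in>D. (\<lambda>e. if e = d then x else 0) e)" using finD dD by (simp add: d_def)
      moreover have "\<forall>e\<in>D. (\<lambda>e. if e = d then x else 0) e \<in> Md f e" using xM by (auto simp: Md_0)
      ultimately have "x \<in> MD f D" unfolding MD_iff by blast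
      moreover have "(\<lambda>i. 1 * x i) = x" by simp
      ultimately have "x \<in> MDbar f D" by (auto simp: MDbar_def x_def pss_grp intro!: exI[of _ 1])
      then have "chi f k x = 0" using kS by (simp add: SS_def)
      moreover have "poly (ip (Pfd f d)) (omg f ^ k) \<noteq> 0" using poly_Pfd_omg[OF f d(1) k] by (simp add: d_def)
      ultimately show False unfolding x_def chi_pss[OF f] by simp
    qed
    then show "k \<in> {k. k < f \<and> ordk f k \<notin> D}" using k by simp
  qed
qed

definition ZZ :: "nat \<Rightarrow> nat set \<Rightarrow> (nat \<Rightarrow> int) set" where
  "ZZ f S = {y \<in> grp_ring f. \<forall>k\<in>S. chi f k y = 0}"

lemma rsf_xf: fixes n :: nat assumes n: "n \<ge> 1" shows "rsquarefree (monom 1 n - 1 :: complex poly)"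
  unfolding rsquarefree_roots
proof (intro allI notI)
  fix a :: complex assume "poly (monom 1 n - 1) a = 0 \<and> poly (pderiv (monom 1 n - 1)) a = 0"
  then have "a ^ n = 1" "of_nat n * a ^ (n - 1) = 0" by (auto simp: poly_monom pderiv_diff pderiv_monom)
  then show False using n by (cases "a = 0") (auto simp: power_0_left)
qed

lemma rsf_dvd: assumes "rsquarefree q" "p dvd q" shows "rsquarefree p"
proof -
  have q0: "q \<noteq> 0" using assms(1) by (simp add: rsquarefree_def)
  then have p0: "p \<noteq> 0" using assms(2) by auto
  have "order a p \<le> order a q" for a using dvd_imp_order_le[OF q0 assms(2)] .
  moreover have "order a q \<le> 1" for a
  proof -
    have "order a q = 0 \<or> order a q = 1" using assms(1) by (simp add: rsquarefree_def)
    then show ?thesis by auto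
  qed
  ultimately have "order a p \<le> 1" for a using le_trans by blast
  then show ?thesis using p0 unfolding rsquarefree_def by (metis le_eq_less_or_eq less_one)
qed

lemma prod_lin_dvd: fixes p :: "complex poly" assumes "finite Z" "\<forall>z\<in>Z. poly p z = 0"
  shows "(\<Prod>z\<in>Z. [:-z, 1:]) dvd p"
  using assms
proof (induction Z arbitrary: p rule: finite_induct)
  case empty then show ?case by simp
next
  case (insert z Z)
  then have "[:-z, 1:] dvd p" by (simp add: poly_eq_0_iff_dvd)
  then obtain p1 where p1: "p = [:-z, 1:] * p1" by (auto elim: dvdE)
  have "\<forall>w\<in>Z. poly p1 w = 0"
  proof
    fix w assume w: "w \<in> Z"
    then have "w \<noteq> z" using insert.hyps by auto
    moreover have "poly p w = 0" using insert.prems w by auto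
    ultimately show "poly p1 w = 0" using p1 by simp
  qed
  then have "(\<Prod>z\<in>Z. [:-z, 1:]) dvd p1" using insert.IH by blast
  then have "[:-z, 1:] * (\<Prod>z\<in>Z. [:-z, 1:]) dvd [:-z, 1:] * p1" by (rule mult_dvd_mono[OF dvd_refl])
  then show ?case unfolding prod.insert[OF insert.hyps] p1 .
qed

lemma rsf_divides: fixes p u :: "complex poly" assumes "rsquarefree p" "\<forall>z. poly p z = 0 \<longrightarrow> poly u z = 0"
  shows "p dvd u"
proof -
  have p0: "p \<noteq> 0" using assms(1) by (simp add: rsquarefree_def)
  have "(\<Prod>z|poly p z = 0. [:-z, 1:]) dvd u"
    using assms(2) poly_roots_finite[OF p0] by (intro prod_lin_dvd) auto
  then have "smult (lead_coeff p) (\<Prod>z|poly p z = 0. [:-z, 1:]) dvd u"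
    using p0 by (intro smult_dvd) auto
  then show ?thesis using complex_poly_decompose_rsquarefree[OF assms(1)] by simp
qed

locale satm =
  fixes f :: nat and M :: "(nat \<Rightarrow> int) set"
  assumes f: "f \<ge> 1" and sub: "is_submodule f M" and tf: "quotient_torsion_free f M"
begin

lemma M_grp: "M \<subseteq> grp_ring f" using sub by (simp add: is_submodule_def)
lemma M_0: "0 \<in> M" using sub by (simp add: is_submodule_def)
lemma M_add: "x \<in> M \<Longrightarrow> y \<in> M \<Longrightarrow> x + y \<in> M" using sub by (simp add: is_submodule_def)
lemma M_gmult: "r \<in> grp_ring f \<Longrightarrow> x \<in> M \<Longrightarrow> gmult f r x \<in> M" using sub by (simp add: is_submodule_def)

lemma ee_grp: "i < f \<Longrightarrow> ee i \<in> grp_ring f" by (simp add: ee_def grp_ring_def)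

lemma gmult_ee0: assumes "x \<in> grp_ring f" shows "gmult f (ee 0) x = x"
proof (rule ext)
  fix k
  show "gmult f (ee 0) x k = x k"
  proof (cases "k < f")
    case True
    have "(\<Sum>j<f. if (0 + j) mod f = k then x j else 0) = (\<Sum>j<f. if j = k then x k else 0)"
      by (intro sum.cong) auto
    then show ?thesis using True f by (simp add: gmult_ee)
  next
    case False then show ?thesis using assms f by (simp add: gmult_ee grp_ring_def)
  qed
qed

lemma M_scale: assumes "x \<in> M" shows "(\<lambda>k. c * x k) \<in> M"
proof -
  have xg: "x \<in> grp_ring f" using assms M_grp by auto
  have "gmult f (\<lambda>j. c * ee 0 j) x = (\<lambda>k. c * gmult f (ee 0) x k)"
    by (auto simp: gmult_def sum_distrib_left mult_ac intro!: ext sum.cong)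
  also have "\<dots> = (\<lambda>k. c * x k)" using gmult_ee0[OF xg] by simp
  finally show ?thesis using M_gmult[of "\<lambda>j. c * ee 0 j" x] assms f
    by (simp add: grp_ring_def ee_def)
qed

lemma M_sum: "(\<And>i. i \<in> A \<Longrightarrow> y i \<in> M) \<Longrightarrow> (\<Sum>i\<in>A. y i) \<in> M"
  by (induction A rule: infinite_finite_induct) (auto simp: M_0 M_add)

definition J where "J = {u. pss f u 0 \<in> M}"

lemma J_add: "u \<in> J \<Longrightarrow> v \<in> J \<Longrightarrow> u + v \<in> J"
  by (simp add: J_def pss_add M_add)

lemma pss_shift_M: assumes "pss f u 0 \<in> M" shows "pss f u i \<in> M"
proof -
  have "gmult f (ee (i mod f)) (pss f u 0) = pss f u (i mod f)" using f by (simp add: gmult_ee_pss)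
  also have "\<dots> = pss f u i" by (rule pss_mod_l')
  finally show ?thesis using M_gmult[OF ee_grp assms, of "i mod f"] f by simp
qed

lemma J_mult: assumes "u \<in> J" shows "q * u \<in> J"
proof -
  have "pss f (q * u) 0 = (\<Sum>i\<le>degree q. (\<lambda>k. coeff q i * pss f u (0 + i) k))"
    by (rule pss_mult_expand)
  also have "\<dots> \<in> M"
  proof (rule M_sum)
    fix i
    have "pss f u (0 + i) \<in> M" using assms by (simp add: J_def pss_shift_M)
    then show "(\<lambda>k. coeff q i * pss f u (0 + i) k) \<in> M" by (rule M_scale)
  qed
  finally show ?thesis by (simp add: J_def)
qed

lemma J_smult: "u \<in> J \<Longrightarrow> smult c u \<in> J"
  using J_mult[of u "[:c:]"] by simp

lemma J_diff: "u \<in> J \<Longrightarrow> v \<in> J \<Longrightarrow> u - v \<in> J"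
  using J_add[of u "smult (-1) v"] J_smult[of v "-1"] by simp

lemma J_sat: assumes "smult c u \<in> J" "c \<noteq> 0" shows "u \<in> J"
proof -
  have 1: "(\<lambda>k. c * pss f u 0 k) \<in> M" using assms by (simp add: J_def pss_smult)
  from tf have "\<forall>x\<in>grp_ring f. \<forall>a. a \<noteq> 0 \<longrightarrow> (\<lambda>k. a * x k) \<in> M \<longrightarrow> x \<in> M"
    by (simp add: quotient_torsion_free_def)
  then have "pss f u 0 \<in> M" using pss_grp[of f u 0] assms(2) 1 by blast
  then show ?thesis by (simp add: J_def)
qed

lemma Xf_J: "monom 1 f - 1 \<in> J"
  using pss_Xf[of f 1 0] M_0 by (simp add: J_def)

lemma pol_J: "m \<in> M \<Longrightarrow> pol f m \<in> J"
  using pss_pol M_grp by (auto simp: J_def)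

lemma gen_ex: "\<exists>g. g \<in> J \<and> g \<noteq> 0 \<and> (\<forall>u\<in>J. u \<noteq> 0 \<longrightarrow> degree g \<le> degree u)"
proof -
  have "monom 1 f - 1 \<in> J \<and> (monom 1 f - 1 :: int poly) \<noteq> 0"
    using Xf_J degree_xn1(1)[OF f, where 'a = int] f by auto
  from ex_has_least_nat[where P = "\<lambda>u. u \<in> J \<and> u \<noteq> 0" and m = degree, OF this]
  obtain g where "g \<in> J \<and> g \<noteq> 0" "\<forall>y. y \<in> J \<and> y \<noteq> 0 \<longrightarrow> degree g \<le> degree y" by blast
  then show ?thesis by auto
qed

end

context satm begin

definition g where "g = (SOME g. g \<in> J \<and> g \<noteq> 0 \<and> (\<forall>u\<in>J. u \<noteq> 0 \<longrightarrow> degree g \<le> degree u))"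

lemma g_props: "g \<in> J" "g \<noteq> 0" "\<And>u. u \<in> J \<Longrightarrow> u \<noteq> 0 \<Longrightarrow> degree g \<le> degree u"
  using someI_ex[OF gen_ex] unfolding g_def[symmetric] by auto

lemma g_div: assumes u: "u \<in> J" shows "\<exists>c q. c \<noteq> 0 \<and> smult c u = g * q"
proof -
  obtain q r where qr: "pseudo_divmod u g = (q, r)" by (cases "pseudo_divmod u g")
  define c where "c = coeff g (degree g) ^ (Suc (degree u) - degree g)"
  have c0: "c \<noteq> 0" using g_props(2) by (simp add: c_def)
  from pseudo_divmod[OF g_props(2) qr] have e: "smult c u = g * q + r" and r: "r = 0 \<or> degree r < degree g"
    by (auto simp: c_def)
  have "r = smult c u - q * g" using e by (simp add: algebra_simps)
  also have "\<dots> \<in> J" using u g_props(1) by (intro J_diff J_smult J_mult)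
  finally have "r \<in> J" .
  have "r = 0"
  proof (rule ccontr)
    assume "r \<noteq> 0"
    then have "degree g \<le> degree r" using g_props(3)[OF \<open>r \<in> J\<close>] by simp
    then show False using r \<open>r \<noteq> 0\<close> by simp
  qed
  then show ?thesis using e c0 by auto
qed

lemma SS_g: assumes k: "k < f" shows "k \<in> SS f M \<longleftrightarrow> poly (ip g) (omg f ^ k) = 0"
proof
  assume "k \<in> SS f M"
  moreover have "pss f g 0 \<in> M" using g_props(1) by (simp add: J_def)
  ultimately have "chi f k (pss f g 0) = 0" by (simp add: SS_def)
  then show "poly (ip g) (omg f ^ k) = 0" using chi_pss[OF f] by simp
next
  assume g0: "poly (ip g) (omg f ^ k) = 0"
  have "chi f k m = 0" if m: "m \<in> M" for m
  proof -
    have u: "pol f m \<in> J" by (rule pol_J[OF m])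
    obtain c q where cq: "c \<noteq> 0" "smult c (pol f m) = g * q" using g_div[OF u] by blast
    have "of_int c * poly (ip (pol f m)) (omg f ^ k) = poly (ip g) (omg f ^ k) * poly (ip q) (omg f ^ k)"
      using arg_cong[OF cq(2), of "\<lambda>p. poly (ip p) (omg f ^ k)"] by simp
    then have "poly (ip (pol f m)) (omg f ^ k) = 0" using g0 cq(1) by simp
    moreover have "pss f (pol f m) 0 = m" using pss_pol m M_grp by auto
    ultimately show "chi f k m = 0" using chi_pss[OF f, of k "pol f m" 0] by simp
  qed
  then show "k \<in> SS f M" using k by (simp add: SS_def)
qed

lemma M_ZZ: "M = ZZ f (SS f M)"
proof
  show "M \<subseteq> ZZ f (SS f M)" using M_grp by (auto simp: ZZ_def SS_def)
  show "ZZ f (SS f M) \<subseteq> M"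
  proof
    fix y assume y: "y \<in> ZZ f (SS f M)"
    then have yg: "y \<in> grp_ring f" by (simp add: ZZ_def)
    define u where "u = pol f y"
    have pu: "pss f u 0 = y" using pss_pol[OF yg] by (simp add: u_def)
    obtain c q where cq: "c \<noteq> 0" "smult c (monom 1 f - 1) = g * q" using g_div[OF Xf_J] by blast
    have roots: "poly (ip u) z = 0" if z: "poly (ip g) z = 0" for z
    proof -
      have "of_int c * poly (ip (monom 1 f - 1)) z = poly (ip g) z * poly (ip q) z"
        using arg_cong[OF cq(2), of "\<lambda>p. poly (ip p) z"] by simp
      then have "z ^ f = 1" using z cq(1) by (simp add: poly_monom)
      then obtain k where k: "k < f" "z = omg f ^ k" using roots_unity_omg[OF f] by blast
      then have "k \<in> SS f M" using SS_g z by simp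
      then have "chi f k y = 0" using y by (simp add: ZZ_def)
      then show ?thesis using chi_pss[OF f, of k u 0] pu k by simp
    qed
    have "ip g dvd smult (of_int c) (monom 1 f - 1)" using arg_cong[OF cq(2), of ip] by simp
    moreover have "rsquarefree (smult (of_int c) (monom 1 f - 1) :: complex poly)"
      using rsf_xf[OF f] cq(1) by (simp add: rsquarefree_def order_smult)
    ultimately have "rsquarefree (ip g)" by (rule rsf_dvd[rotated])
    then have gu: "ip g dvd ip u" using roots by (intro rsf_divides) auto
    obtain q' r' where qr: "pseudo_divmod u g = (q', r')" by (cases "pseudo_divmod u g")
    define c' where "c' = coeff g (degree g) ^ (Suc (degree u) - degree g)"
    have c0: "c' \<noteq> 0" using g_props(2) by (simp add: c'_def)
    from pseudo_divmod[OF g_props(2) qr] have e: "smult c' u = g * q' + r'" and r: "r' = 0 \<or> degree r' < degree g"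
      by (auto simp: c'_def)
    have "r' = 0"
    proof (rule ccontr)
      assume r0: "r' \<noteq> 0"
      have "ip r' = smult (of_int c') (ip u) - ip g * ip q'" using arg_cong[OF e, of ip] by simp
      moreover have "ip g dvd smult (of_int c') (ip u) - ip g * ip q'"
        using gu by (intro dvd_diff) (auto simp: dvd_smult)
      ultimately have "ip g dvd ip r'" by simp
      then have "degree (ip g) \<le> degree (ip r')" using r0 by (intro dvd_imp_degree_le) auto
      then show False using r r0 by simp
    qed
    then have "smult c' u = q' * g" using e by (simp add: mult.commute)
    then have "smult c' u \<in> J" using J_mult[OF g_props(1), of q'] by simp
    then have "u \<in> J" using J_sat c0 by blast
    then show "y \<in> M" using pu by (simp add: J_def)
  qed
qed

end

lemma freshman: fixes x y :: "'a::comm_ring_1" and p :: nat assumes p: "prime p"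
  shows "\<exists>w. (x + y) ^ p = x ^ p + y ^ p + of_nat p * w"
proof -
  define F where "F k = of_nat (p choose k) * x ^ k * y ^ (p - k)" for k
  have p0: "p \<noteq> 0" using p by auto
  have "{..p} = insert 0 (insert p {0<..<p})" by auto
  then have "(\<Sum>k\<le>p. F k) = F 0 + (F p + (\<Sum>k\<in>{0<..<p}. F k))" using p0 by simp
  moreover have "F 0 = y ^ p" "F p = x ^ p" by (simp_all add: F_def)
  moreover have "(\<Sum>k\<in>{0<..<p}. F k) = of_nat p * (\<Sum>k\<in>{0<..<p}. of_nat ((p choose k) div p) * x ^ k * y ^ (p - k))"
    unfolding sum_distrib_left
  proof (intro sum.cong refl)
    fix k assume "k \<in> {0<..<p}"
    then have "p dvd (p choose k)" using p by (intro dvd_choose_prime) auto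
    then have "p choose k = p * ((p choose k) div p)" by simp
    then show "F k = of_nat p * (of_nat ((p choose k) div p) * x ^ k * y ^ (p - k))"
      unfolding F_def by (metis (no_types, lifting) mult.assoc of_nat_mult)
  qed
  ultimately have "(x + y) ^ p = x ^ p + y ^ p + of_nat p * (\<Sum>k\<in>{0<..<p}. of_nat ((p choose k) div p) * x ^ k * y ^ (p - k))"
    unfolding binomial_ring F_def[symmetric] by (simp add: algebra_simps)
  then show ?thesis by blast
qed

lemma fermat_nat_aux: fixes a p :: nat assumes p: "prime p" shows "int p dvd int a ^ p - int a"
proof (induction a)
  case 0 then show ?case using p by (simp add: prime_gt_0_nat power_0_left)
next
  case (Suc a)
  obtain w :: int where w: "(int a + 1) ^ p = int a ^ p + 1 ^ p + of_nat p * w" using freshman[OF p] by blast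
  have e: "int (Suc a) ^ p - int (Suc a) = (int a ^ p - int a) + of_nat p * w" using w by (simp add: algebra_simps)
  have d: "int p dvd (int a ^ p - int a) + of_nat p * w" using Suc.IH by (simp add: dvd_add)
  show ?case unfolding e by (rule d)
qed

lemma fermat_int: fixes a :: int and p :: nat assumes p: "prime p" shows "int p dvd a ^ p - a"
proof -
  have pp: "int p > 0" using p by (simp add: prime_gt_0_nat)
  define b where "b = nat (a mod int p)"
  have b: "int b = a mod int p" using pp by (simp add: b_def)
  have c1: "[a = int b] (mod int p)" by (simp add: b cong_def)
  have "[a ^ p = int b ^ p] (mod int p)" using c1 by (rule cong_pow)
  moreover have "[int b ^ p = int b] (mod int p)" using fermat_nat_aux[OF p, of b] by (simp add: cong_iff_dvd_diff)
  ultimately have "[a ^ p = a] (mod int p)" using c1 by (meson cong_sym cong_trans)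
  then show ?thesis by (simp add: cong_iff_dvd_diff)
qed

lemma frob: fixes h :: "int poly" and p :: nat assumes p: "prime p"
  shows "[:int p:] dvd h ^ p - pcompose h (monom 1 p)"
proof (induction h)
  case 0 then show ?case using p by (simp add: power_0_left prime_gt_0_nat)
next
  case (pCons a h)
  define A where "A = [:a:]"
  define B where "B = monom 1 1 * h"
  have hh: "pCons a h = A + B" by (simp add: A_def B_def monom_Suc monom_0 pCons_eq_iff)
  obtain w where w: "(A + B) ^ p = A ^ p + B ^ p + of_nat p * w" using freshman[OF p] by blast
  have pc: "pcompose (pCons a h) (monom 1 p) = A + monom 1 p * pcompose h (monom 1 p)"
    by (simp only: pcompose_pCons A_def)
  have Bp: "B ^ p = monom 1 p * h ^ p" by (simp add: B_def power_mult_distrib monom_power)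
  have eq: "pCons a h ^ p - pcompose (pCons a h) (monom 1 p)
      = [:int p:] * w + (A ^ p - A) + monom 1 p * (h ^ p - pcompose h (monom 1 p))"
  proof -
    have "pCons a h ^ p - pcompose (pCons a h) (monom 1 p) = (A + B) ^ p - (A + monom 1 p * pcompose h (monom 1 p))"
      by (simp only: hh[symmetric] pc)
    also have "\<dots> = [:int p:] * w + (A ^ p - A) + monom 1 p * (h ^ p - pcompose h (monom 1 p))"
      unfolding w Bp by (simp add: of_nat_poly algebra_simps)
    finally show ?thesis .
  qed
  have dA: "[:int p:] dvd A ^ p - A"
  proof -
    obtain c where "a ^ p - a = int p * c" using fermat_int[OF p, of a] by (auto elim: dvdE)
    then have "A ^ p - A = [:int p:] * [:c:]" by (simp add: A_def poly_const_pow)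
    then show ?thesis by simp
  qed
  have d1: "[:int p:] dvd [:int p:] * w" by (rule dvd_triv_left)
  have d3: "[:int p:] dvd monom 1 p * (h ^ p - pcompose h (monom 1 p))" using pCons.IH by (rule dvd_mult)
  show ?case unfolding eq by (intro dvd_add d1 dA d3)
qed

lemma dvd_pow_diff: fixes x y :: "'a::comm_ring_1" shows "x - y dvd x ^ n - y ^ n"
proof (induction n)
  case 0 then show ?case by simp
next
  case (Suc n)
  have "x ^ Suc n - y ^ Suc n = x * (x ^ n - y ^ n) + (x - y) * y ^ n" by (simp add: algebra_simps)
  then show ?case using Suc.IH by (simp add: dvd_add)
qed

lemma not_unit_ideal: fixes m a b :: "int poly" and P :: int
  assumes P: "prime P" and dm: "degree m \<ge> 1" and lc: "\<not> P dvd lead_coeff m"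
  shows "1 \<noteq> m * a + [:P:] * b"
proof
  assume e: "1 = m * a + [:P:] * b"
  show False
  proof (cases "\<forall>i. P dvd coeff a i")
    case True
    have "coeff (1 :: int poly) 0 = coeff m 0 * coeff a 0 + P * coeff b 0"
      using arg_cong[OF e, of "\<lambda>x. coeff x 0"] by (simp add: coeff_mult)
    moreover have "P dvd coeff m 0 * coeff a 0 + P * coeff b 0"
    proof (rule dvd_add)
      show "P dvd coeff m 0 * coeff a 0" using True by (simp add: dvd_mult)
    qed simp
    ultimately have "P dvd 1" by simp
    then show False using P not_prime_unit by blast
  next
    case False
    define S where "S = {i. \<not> P dvd coeff a i}"
    have finS: "finite S"
    proof (rule finite_subset)
      show "S \<subseteq> {..degree a}"
      proof
        fix i assume "i \<in> S"
        then have "coeff a i \<noteq> 0" by (auto simp: S_def)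
        then show "i \<in> {..degree a}" using le_degree by auto
      qed
    qed simp
    have Sne: "S \<noteq> {}" using False by (auto simp: S_def)
    define N where "N = Max S"
    have NS: "\<not> P dvd coeff a N" using Max_in[OF finS Sne] by (simp add: N_def S_def)
    have above: "P dvd coeff a i" if "i > N" for i
    proof (rule ccontr)
      assume "\<not> P dvd coeff a i"
      then have "i \<in> S" by (simp add: S_def)
      then have "i \<le> N" unfolding N_def using finS by (rule Max_ge[rotated])
      then show False using that by simp
    qed
    define dm' where "dm' = degree m"
    have "coeff (m * a) (dm' + N) = (\<Sum>i\<le>dm' + N. coeff m i * coeff a (dm' + N - i))"
      by (rule coeff_mult)
    also have "\<dots> = coeff m dm' * coeff a (dm' + N - dm') + (\<Sum>i\<in>{..dm' + N} - {dm'}. coeff m i * coeff a (dm' + N - i))"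
      by (rule sum.remove) auto
    finally have c1: "coeff (m * a) (dm' + N) = lead_coeff m * coeff a N + (\<Sum>i\<in>{..dm' + N} - {dm'}. coeff m i * coeff a (dm' + N - i))"
      by (simp add: dm'_def)
    define SS' where "SS' = (\<Sum>i\<in>{..dm' + N} - {dm'}. coeff m i * coeff a (dm' + N - i))"
    have dS: "P dvd SS'" unfolding SS'_def
    proof (rule dvd_sum)
      fix i assume i: "i \<in> {..dm' + N} - {dm'}"
      show "P dvd coeff m i * coeff a (dm' + N - i)"
      proof (cases "i < dm'")
        case True
        then have "dm' + N - i > N" by simp
        then show ?thesis using above by simp
      next
        case False
        then have "i > degree m" using i by (auto simp: dm'_def)
        then show ?thesis by (simp add: coeff_eq_0)
      qed
    qed
    have eqA: "coeff (m * a) (dm' + N) = - (P * coeff b (dm' + N))"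
    proof -
      have z: "coeff (1 :: int poly) (dm' + N) = 0" using dm by (auto simp: coeff_1 dm'_def)
      have e1: "coeff (1::int poly) (dm' + N) = coeff (m * a) (dm' + N) + P * coeff b (dm' + N)"
        using arg_cong[OF e, of "\<lambda>x. coeff x (dm' + N)"] by (simp del: coeff_1)
      show ?thesis using z e1 by linarith
    qed
    have "lead_coeff m * coeff a N = - (P * coeff b (dm' + N)) - SS'"
      using c1 eqA unfolding SS'_def by linarith
    then have "P dvd lead_coeff m * coeff a N" using dS by (simp add: dvd_diff)
    then show False using P lc NS by (simp add: prime_dvd_mult_iff)
  qed
qed

lemma minpoly_ex: fixes z :: complex and n :: nat assumes n: "n \<ge> 1" and z: "z ^ n = 1"
  shows "\<exists>m. m \<noteq> 0 \<and> poly (ip m) z = 0 \<and> (\<forall>u. poly (ip u) z = 0 \<longrightarrow> m dvd u)"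
proof -
  have "(monom 1 n - 1 :: int poly) \<noteq> 0 \<and> poly (ip (monom 1 n - 1)) z = 0"
    using degree_xn1(1)[OF n, where 'a = int] n z by (auto simp: poly_monom)
  from ex_has_least_nat[where P = "\<lambda>u. u \<noteq> 0 \<and> poly (ip u) z = 0" and m = degree, OF this]
  obtain m0 where m0: "m0 \<noteq> 0" "poly (ip m0) z = 0" and min: "\<And>u. u \<noteq> 0 \<Longrightarrow> poly (ip u) z = 0 \<Longrightarrow> degree m0 \<le> degree u"
    by blast
  define m where "m = primitive_part m0"
  have m0e: "m0 = smult (content m0) m" by (simp add: m_def)
  have cm0: "content m0 \<noteq> 0" using m0 by simp
  have mz: "poly (ip m) z = 0" using m0(2) cm0 by (subst (asm) m0e) simp
  have mnz: "m \<noteq> 0" using m0 by (simp add: m_def)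
  have dm: "degree m = degree m0" by (simp add: m_def)
  have cm: "content m = 1" using m0 by (simp add: m_def)
  have "m dvd u" if u: "poly (ip u) z = 0" for u
  proof -
    obtain q r where qr: "pseudo_divmod u m = (q, r)" by (cases "pseudo_divmod u m")
    define c where "c = coeff m (degree m) ^ (Suc (degree u) - degree m)"
    have c0: "c \<noteq> 0" using mnz by (simp add: c_def)
    from pseudo_divmod[OF mnz qr] have e: "smult c u = m * q + r" and r: "r = 0 \<or> degree r < degree m"
      by (auto simp: c_def)
    have "poly (ip r) z = 0"
      using arg_cong[OF e, of "\<lambda>p. poly (ip p) z"] u mz by simp
    then have "r = 0" using min[of r] r dm by (cases "r = 0") auto
    then have e2: "smult c u = m * q" using e by simp
    have "primitive_part (smult c u) = primitive_part (m * q)" using e2 by simp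
    then have "smult (sgn c) (primitive_part u) = m * primitive_part q"
      by (simp add: primitive_part_smult primitive_part_mult primitive_part_prim[OF cm])
    then have h1: "smult (sgn c) (smult (sgn c) (primitive_part u)) = smult (sgn c) (m * primitive_part q)"
      by simp
    have ss: "sgn c * sgn c = 1" using c0 by (simp add: sgn_if)
    from h1 have "primitive_part u = m * smult (sgn c) (primitive_part q)" using c0 by (simp add: ss)
    then have "smult (content u) (primitive_part u) = m * smult (content u) (smult (sgn c) (primitive_part q))"
      by (simp add: mult_smult_right)
    then have "u = m * smult (content u) (smult (sgn c) (primitive_part q))" by simp
    then show "m dvd u" by (rule dvdI)
  qed
  then show ?thesis using mnz mz by blast
qed

definition inI :: "int poly \<Rightarrow> int \<Rightarrow> int poly \<Rightarrow> bool" where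
  "inI m P x \<longleftrightarrow> (\<exists>a b. x = m * a + [:P:] * b)"

lemma inI_add: assumes "inI m P x" "inI m P y" shows "inI m P (x + y)"
proof -
  obtain a1 b1 a2 b2 where "x = m * a1 + [:P:] * b1" "y = m * a2 + [:P:] * b2"
    using assms unfolding inI_def by blast
  then have "x + y = m * (a1 + a2) + [:P:] * (b1 + b2)" by (simp add: algebra_simps smult_add_right)
  then show ?thesis unfolding inI_def by blast
qed

lemma inI_mult: assumes "inI m P x" shows "inI m P (x * y)"
proof -
  obtain a1 b1 where "x = m * a1 + [:P:] * b1"
    using assms unfolding inI_def by blast
  then have "x * y = m * (a1 * y) + [:P:] * (b1 * y)" by (simp add: algebra_simps)
  then show ?thesis unfolding inI_def by blast
qed

lemma inI_dvd: "inI m P x \<Longrightarrow> x dvd y \<Longrightarrow> inI m P y"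
  using inI_mult by (auto elim!: dvdE)

lemma inI_m: assumes "m dvd x" shows "inI m P x"
proof -
  obtain k where "x = m * k" using assms by (auto elim: dvdE)
  then have "x = m * k + [:P:] * 0" by simp
  then show ?thesis unfolding inI_def by blast
qed

lemma inI_P: assumes "[:P:] dvd x" shows "inI m P x"
proof -
  obtain k where "x = [:P:] * k" using assms by (auto elim: dvdE)
  then have "x = m * 0 + [:P:] * k" by simp
  then show ?thesis unfolding inI_def by blast
qed

lemma inI_diff: "inI m P x \<Longrightarrow> inI m P y \<Longrightarrow> inI m P (x - y)"
  using inI_add[of m P x "y * (-1)"] inI_mult[of m P y "-1"] by simp

lemma frob_root: fixes z :: complex and n p :: nat and m :: "int poly"
  assumes n: "n \<ge> 1" and z: "z ^ n = 1" and p: "prime p" and pn: "\<not> p dvd n"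
    and m0: "m \<noteq> 0" and mz: "poly (ip m) z = 0" and mmin: "\<And>u. poly (ip u) z = 0 \<Longrightarrow> m dvd u"
  shows "poly (ip m) (z ^ p) = 0"
proof (rule ccontr)
  assume nz: "poly (ip m) (z ^ p) \<noteq> 0"
  define P where "P = int p"
  have P: "prime P" using p by (simp add: P_def)
  have "m dvd monom 1 n - 1" using z by (intro mmin) (simp add: poly_monom)
  then obtain h where h: "monom 1 n - 1 = m * h" by (auto elim: dvdE)
  have "lead_coeff m * lead_coeff h = 1"
    using arg_cong[OF h, of lead_coeff] degree_xn1(2)[OF n, where 'a = int] by (simp add: lead_coeff_mult)
  then have lcm: "\<not> P dvd lead_coeff m"
  proof -
    assume lc1: "lead_coeff m * lead_coeff h = 1"
    show ?thesis
    proof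
      assume "P dvd lead_coeff m"
      then have "P dvd lead_coeff m * lead_coeff h" by (rule dvd_mult2)
      then have "P dvd 1" using lc1 by simp
      then show False using P not_prime_unit by blast
    qed
  qed
  have dm: "degree m \<ge> 1"
  proof (rule ccontr)
    assume "\<not> degree m \<ge> 1"
    then have "degree m = 0" by simp
    then obtain c where "m = [:c:]" by (elim degree_eq_zeroE) auto
    then show False using mz m0 by simp
  qed
  have "poly (ip (monom 1 n - 1)) (z ^ p) = 0"
    using z by (simp add: poly_monom power_mult[symmetric] mult.commute power_mult)
  then have "poly (ip h) (z ^ p) = 0" using nz h by simp
  then have "poly (ip (pcompose h (monom 1 p))) z = 0" by (simp add: poly_ip_pcompose poly_monom)
  then have "m dvd pcompose h (monom 1 p)" by (rule mmin)
  then have I1: "inI m P (pcompose h (monom 1 p))" by (rule inI_m)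
  have "inI m P (h ^ p - pcompose h (monom 1 p))" using frob[OF p, of h] by (intro inI_P) (simp add: P_def)
  from inI_add[OF this I1] have Ihp: "inI m P (h ^ p)" by simp
  define A where "A = monom (int n) (n - 1)"
  have "pderiv (monom 1 n - 1 :: int poly) = A" by (simp add: A_def pderiv_diff pderiv_monom)
  then have "A = m * pderiv h + h * pderiv m" using h by (simp add: pderiv_mult)
  then have "inI m P (A - h * pderiv m)" by (intro inI_m) simp
  then have "inI m P (A ^ p - (h * pderiv m) ^ p)" using dvd_pow_diff by (rule inI_dvd)
  moreover have "inI m P ((h * pderiv m) ^ p)" using Ihp by (simp add: power_mult_distrib inI_mult)
  ultimately have "inI m P (A ^ p)" using inI_add by fastforce
  then have IA: "inI m P (A ^ p * monom 1 p)" by (rule inI_mult)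
  have "A ^ p * monom 1 p = [:int n ^ p:] * monom 1 (n * p)"
  proof -
    have "A ^ p * monom 1 p = monom (int n ^ p) ((n - 1) * p + p)"
      by (simp add: A_def monom_power mult_monom)
    also have "(n - 1) * p + p = n * p" using n by (simp add: algebra_simps)
    finally show ?thesis by (simp add: smult_monom)
  qed
  with IA have I2: "inI m P ([:int n ^ p:] * monom 1 (n * p))" by simp
  have "(monom 1 n - 1 :: int poly) dvd (monom 1 n) ^ p - 1 ^ p" by (rule dvd_pow_diff)
  then have "m dvd monom 1 (n * p) - 1" using h by (simp add: monom_power dvd_mult_left)
  then have "inI m P ([:int n ^ p:] * (monom 1 (n * p) - 1))" by (intro inI_m dvd_mult)
  from inI_diff[OF I2 this] have I3: "inI m P [:int n ^ p:]" by (simp add: algebra_simps)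
  have "coprime P (int n ^ p)" using p pn P
    by (simp add: P_def prime_imp_coprime coprime_power_right_iff)
  then obtain u v where uv: "u * P + v * int n ^ p = 1" using bezout_int[of P "int n ^ p"] by auto
  have eq1: "[:1:] = [:u:] * [:P:] + [:v:] * [:int n ^ p:]" using uv by (simp add: mult.commute)
  have Iu: "inI m P ([:u:] * [:P:])" by (rule inI_P) (rule dvd_triv_right)
  have Iv: "inI m P ([:v:] * [:int n ^ p:])" using inI_mult[OF I3, of "[:v:]"] by (simp only: mult.commute)
  have "inI m P ([:u:] * [:P:] + [:v:] * [:int n ^ p:])" by (rule inI_add[OF Iu Iv])
  then have "inI m P [:1:]" unfolding eq1[symmetric] .
  then have "inI m P 1" by (simp add: one_pCons)
  then show False using not_unit_ideal[OF P dm lcm] unfolding inI_def by metis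
qed

lemma root_pow_prime: fixes z :: complex and n p :: nat and g :: "int poly"
  assumes n: "n \<ge> 1" and z: "z ^ n = 1" and p: "prime p" and pn: "\<not> p dvd n" and gz: "poly (ip g) z = 0"
  shows "poly (ip g) (z ^ p) = 0"
proof -
  obtain m where m: "m \<noteq> 0" "poly (ip m) z = 0" "\<And>u. poly (ip u) z = 0 \<Longrightarrow> m dvd u"
    using minpoly_ex[OF n z] by blast
  have "poly (ip m) (z ^ p) = 0" by (rule frob_root[OF n z p pn m(1) m(2) m(3)])
  moreover obtain s where "g = m * s" using m(3)[OF gz] by (auto elim: dvdE)
  ultimately show ?thesis by simp
qed

lemma root_pow_coprime: fixes z :: complex and n a :: nat and g :: "int poly"
  assumes n: "n \<ge> 1" and z: "z ^ n = 1" and gz: "poly (ip g) z = 0"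
  shows "coprime a n \<Longrightarrow> poly (ip g) (z ^ a) = 0"
proof (induction a rule: less_induct)
  case (less a)
  show ?case
  proof (cases "a \<le> 1")
    case True
    then consider "a = 0" | "a = 1" by linarith
    then show ?thesis
    proof cases
      case 1
      then have "n = 1" using less.prems by simp
      then have "z = 1" using z by simp
      then show ?thesis using gz 1 by simp
    next
      case 2 then show ?thesis using gz by simp
    qed
  next
    case False
    obtain p where p: "prime p" "p dvd a" using prime_factor_nat[of a] False by auto
    obtain b where b: "a = p * b" using p(2) by (auto elim: dvdE)
    have p2: "p \<ge> 2" using p(1) by (simp add: prime_ge_2_nat)
    have "b \<noteq> 0" using b False by (cases "b = 0") auto
    have "1 < p" using p2 by simp
    moreover have "0 < b" using \<open>b \<noteq> 0\<close> by simp
    ultimately have "1 * b < p * b" by (rule mult_strict_right_mono)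
    then have ba: "b < a" using b by simp
    have cb: "coprime b n" using less.prems b by simp
    have pn: "\<not> p dvd n"
    proof
      assume "p dvd n"
      then have "is_unit p" using coprime_common_divisor[OF less.prems p(2)] by simp
      then show False using p(1) by (simp add: not_prime_unit)
    qed
    have gb: "poly (ip g) (z ^ b) = 0" using less.IH[OF ba cb] .
    have "(z ^ b) ^ n = (z ^ n) ^ b" by (simp only: power_mult[symmetric] mult.commute)
    then have zb: "(z ^ b) ^ n = 1" using z by simp
    have "poly (ip g) ((z ^ b) ^ p) = 0" by (rule root_pow_prime[OF n zb p(1) pn gb])
    moreover have "(z ^ b) ^ p = z ^ a" by (simp only: b power_mult[symmetric] mult.commute)
    ultimately show ?thesis by simp
  qed
qed

lemma gcd_eq_from_ordk: fixes f k k' :: nat assumes f: "f \<ge> 1" and o: "ordk f k = ordk f k'"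
  shows "gcd k f = gcd k' f"
proof -
  define x y where "x = gcd k f" and "y = gcd k' f"
  have x: "f = x * (f div x)" and y: "f = y * (f div y)" by (simp_all add: x_def y_def)
  have q: "f div x = f div y" using o by (simp add: ordk_def x_def y_def)
  have "f div x > 0" using f x by (metis gr0I mult_0_right not_one_le_zero)
  then have "x = y" using x y q by (metis mult_right_cancel not_gr0)
  then show ?thesis by (simp add: x_def y_def)
qed

lemma galois: fixes f k k' :: nat and g :: "int poly"
  assumes f: "f \<ge> 1" and k: "k < f" and k': "k' < f" and o: "ordk f k = ordk f k'"
    and gz: "poly (ip g) (omg f ^ k) = 0"
  shows "poly (ip g) (omg f ^ k') = 0"
proof -
  define gg where "gg = gcd k f"
  have gg': "gcd k' f = gg" using gcd_eq_from_ordk[OF f o] by (simp add: gg_def)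
  have gg0: "gg > 0" using f by (simp add: gg_def)
  define d where "d = f div gg"
  define u where "u = k div gg"
  define u' where "u' = k' div gg"
  have fd: "f = gg * d" by (simp add: d_def gg_def)
  have ku: "k = gg * u" by (simp add: u_def gg_def)
  have ku': "k' = gg * u'" using gg' by (simp add: u'_def) (metis dvd_mult_div_cancel gcd_dvd1)
  have d1: "d \<ge> 1" using fd f by (cases d) auto
  have cu: "coprime u d" unfolding u_def d_def gg_def using f by (intro div_gcd_coprime) auto
  have cu': "coprime u' d"
  proof -
    have "coprime (k' div gcd k' f) (f div gcd k' f)" using f by (intro div_gcd_coprime) auto
    then show ?thesis by (simp add: u'_def d_def gg')
  qed
  obtain v where v: "[u * v = Suc 0] (mod d)" using cong_solve_coprime_nat[OF cu] by blast
  have cv: "coprime v d" using v coprime_iff_invertible_nat[of v d] by (metis mult.commute)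
  define a where "a = v * u'"
  have ca: "coprime a d" using cv cu' by (simp add: a_def)
  define z where "z = omg f ^ k"
  have zd: "z ^ d = 1"
  proof -
    have "z ^ d = omg f ^ (f * u)" by (simp add: z_def power_mult[symmetric] ku fd mult_ac)
    also have "\<dots> = 1" using f by (simp add: power_mult)
    finally show ?thesis .
  qed
  have "poly (ip g) (z ^ a) = 0" using root_pow_coprime[OF d1 zd _ ca] gz by (simp add: z_def)
  moreover have "z ^ a = omg f ^ k'"
  proof -
    have "[u * v * u' = Suc 0 * u'] (mod d)" using v by (rule cong_mult) simp
    then have "(u * v * u') mod d = u' mod d" by (simp add: cong_def)
    then have "(gg * (u * v * u')) mod (gg * d) = (gg * u') mod (gg * d)" by (simp add: mod_mult_mult1)
    then have "(k * a) mod f = k' mod f" by (simp add: ku ku' fd a_def mult_ac)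
    then have "omg f ^ (k * a) = omg f ^ k'" using omg_pow_eq_iff[OF f] by simp
    then show ?thesis by (simp add: z_def power_mult)
  qed
  ultimately show ?thesis by simp
qed

theorem corollaryA2:
  fixes f :: nat and M :: "(nat \<Rightarrow> int) set"
  assumes "f \<ge> 1"
  shows "(is_submodule f M \<and> quotient_torsion_free f M) \<longleftrightarrow>
         (\<exists>D. D \<subseteq> {d. 0 < d \<and> d dvd f} \<and> M = MDbar f D)"
proof
  assume "\<exists>D. D \<subseteq> {d. 0 < d \<and> d dvd f} \<and> M = MDbar f D"
  then show "is_submodule f M \<and> quotient_torsion_free f M" using MDbar_sat[OF assms] by blast
next
  assume sat: "is_submodule f M \<and> quotient_torsion_free f M"
  interpret satm f M using assms sat by unfold_locales auto
  define S where "S = SS f M"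
  define D where "D = {d. 0 < d \<and> d dvd f \<and> (\<exists>k<f. ordk f k = d \<and> k \<notin> S)}"
  have Dsub: "D \<subseteq> {d. 0 < d \<and> d dvd f}" by (auto simp: D_def)
  have SD: "S = {k. k < f \<and> ordk f k \<notin> D}"
  proof
    show "S \<subseteq> {k. k < f \<and> ordk f k \<notin> D}"
    proof
      fix k assume kS: "k \<in> S"
      then have k: "k < f" by (simp add: S_def SS_def)
      have "ordk f k \<notin> D"
      proof
        assume "ordk f k \<in> D"
        then obtain k' where k': "k' < f" "ordk f k' = ordk f k" "k' \<notin> S" by (auto simp: D_def)
        have "poly (ip g) (omg f ^ k) = 0" using SS_g[OF k] kS by (simp add: S_def)
        then have "poly (ip g) (omg f ^ k') = 0" using galois[OF assms k k'(1)] k'(2) by simp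
        then have "k' \<in> S" using SS_g[OF k'(1)] by (simp add: S_def)
        then show False using k'(3) by simp
      qed
      then show "k \<in> {k. k < f \<and> ordk f k \<notin> D}" using k by simp
    qed
    show "{k. k < f \<and> ordk f k \<notin> D} \<subseteq> S"
    proof
      fix k assume "k \<in> {k. k < f \<and> ordk f k \<notin> D}"
      then have k: "k < f" and o: "ordk f k \<notin> D" by auto
      show "k \<in> S"
      proof (rule ccontr)
        assume "k \<notin> S"
        then have "ordk f k \<in> D" using k ordk_pos[OF assms, of k] ordk_dvd[of f k] by (auto simp: D_def)
        then show False using o by simp
      qed
    qed
  qed
  interpret B: satm f "MDbar f D" using assms MDbar_sat[OF assms Dsub] by unfold_locales auto
  have "SS f (MDbar f D) = S" using SS_MDbar[OF assms Dsub] SD by simp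
  then have "M = MDbar f D" using M_ZZ B.M_ZZ by (simp add: S_def)
  then show "\<exists>D. D \<subseteq> {d. 0 < d \<and> d dvd f} \<and> M = MDbar f D" using Dsub by blast
qed


end
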